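(* Let $q$ be an odd prime power, $m\geq 2$ and $n=\frac{q^m+1}{2}$. Let $\delta$ be an integer with $2\leq\delta\leq\frac{q^{m/2}+3}{2}$ if $m\geq 4$ is even, and $2\leq\delta\leq\frac{q^{(m+1)/2}-q+2}{2}$ if $m\geq 3$ is odd. Then the negacyclic BCH code $\mathcal{C}_{(q,n,\delta,0)}$ has parameters $$\left[n,\ n-2m\left\lceil\frac{(2\delta-3)(q-1)}{2q}\right\rceil,\ d\right]$$ and generator polynomial $$g(x)=\prod_{\substack{0\leq i\leq\delta-2\\ i\not\equiv\frac{q-1}{2}\pmod q}}\mathbb{M}_{\beta^{1+2i}}(x),$$ where $d\geq 2\delta+1$ if $\delta\equiv\frac{q+1}{2}\pmod q$, and $d\geq 2\delta-1$ otherwise.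
   Context: Let $q$ be an odd prime power and $n$ a positive integer with $\gcd(n,q)=1$. Let $\ell$ be the order of $q$ modulo $2n$, $\alpha$ a primitive element of $\mathrm{GF}(q^\ell)$ and $\beta=\alpha^{(q^\ell-1)/(2n)}$, a primitive $2n$-th root of unity. $\mathbb{M}_{\beta^{j}}(x)$ is the minimal polynomial of $\beta^{j}$ over $\mathrm{GF}(q)$. For $2\leq\delta\leq n$, $\mathcal{C}_{(q,n,\delta,0)}$ is the negacyclic code of length $n$ over $\mathrm{GF}(q)$ (ideal of $\mathrm{GF}(q)[x]/(x^n+1)$) generated by $\mathrm{lcm}\big(\mathbb{M}_{\beta^{1}}(x),\mathbb{M}_{\beta^{3}}(x),\ldots,\mathbb{M}_{\beta^{1+2(\delta-2)}}(x)\big)$. Parameters $[n,k,d]$ are length, dimension, minimum Hamming distance. *)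

theory Defs
  imports "HOL-Computational_Algebra.Computational_Algebra" "HOL-Number_Theory.Number_Theory"
begin

text \<open>GF(q) is a finite field type 'a; GF(q^l) is a finite field type 'b together with a
  field embedding phi :: 'a => 'b (a ring homomorphism 1 |-> 1).\<close>

definition ring_embedding :: "('a::field \<Rightarrow> 'b::field) \<Rightarrow> bool" where
  "ring_embedding phi \<longleftrightarrow> phi 1 = 1 \<and> (\<forall>x y. phi (x + y) = phi x + phi y) \<and>
     (\<forall>x y. phi (x * y) = phi x * phi y)"

definition minpoly :: "('a::field \<Rightarrow> 'b::field) \<Rightarrow> 'b \<Rightarrow> 'a poly" where
  "minpoly phi b = (THE p. lead_coeff p = 1 \<and> poly (map_poly phi p) b = 0 \<and>
      (\<forall>r. r \<noteq> 0 \<and> poly (map_poly phi r) b = 0 \<longrightarrow> degree p \<le> degree r))"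

definition primitive_element :: "'b::{finite,field} \<Rightarrow> bool" where
  "primitive_element a \<longleftrightarrow> a \<noteq> 0 \<and> (\<forall>k. 0 < k \<and> k < card (UNIV :: 'b set) - 1 \<longrightarrow> a ^ k \<noteq> 1)"

text \<open>The negacyclic code of length n generated by g: the ideal generated by g in
  F[x]/(x^n+1), elements represented by their reduced representatives (degree < n).\<close>
definition negacyclic_code :: "nat \<Rightarrow> 'a::field poly \<Rightarrow> 'a poly set" where
  "negacyclic_code n g = {(f * g) mod ([:0, 1:] ^ n + 1) | f. True}"

text \<open>The negacyclic BCH code C_(q,n,delta,0) w.r.t. beta (a primitive 2n-th root of unity).\<close>
definition bch_generator :: "('a::field_gcd \<Rightarrow> 'b::field) \<Rightarrow> 'b \<Rightarrow> nat \<Rightarrow> 'a poly" where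
  "bch_generator phi beta delta = Lcm ((\<lambda>i. minpoly phi (beta ^ (1 + 2 * i))) ` {0..delta - 2})"

definition negacyclic_bch :: "('a::field_gcd \<Rightarrow> 'b::field) \<Rightarrow> 'b \<Rightarrow> nat \<Rightarrow> nat \<Rightarrow> 'a poly set" where
  "negacyclic_bch phi beta n delta = negacyclic_code n (bch_generator phi beta delta)"

definition hamming_dist :: "nat \<Rightarrow> 'a::zero poly \<Rightarrow> 'a poly \<Rightarrow> nat" where
  "hamming_dist n c1 c2 = card {i. i < n \<and> Polynomial.coeff c1 i \<noteq> Polynomial.coeff c2 i}"

definition min_dist :: "nat \<Rightarrow> 'a::zero poly set \<Rightarrow> nat" where
  "min_dist n C = Min {hamming_dist n c1 c2 | c1 c2. c1 \<in> C \<and> c2 \<in> C \<and> c1 \<noteq> c2}"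

definition code_dim :: "'a::field poly set \<Rightarrow> nat" where
  "code_dim C = vector_space.dim (Polynomial.smult :: 'a \<Rightarrow> 'a poly \<Rightarrow> 'a poly) C"

end

theory Submission
  imports Defs
begin

lemma hom_sum:
  assumes "f 0 = 0" "\<And>x y. f (x + y) = f x + f y"
  shows "f (sum g A) = (\<Sum>a\<in>A. f (g a))"
  by (induction A rule: infinite_finite_induct) (auto simp: assms)

lemma map_poly_hom_add:
  assumes "f 0 = 0" "\<And>x y. f (x + y) = f x + f y"
  shows "map_poly f (p + r) = map_poly f p + map_poly f r"
  by (rule poly_eqI) (simp add: coeff_map_poly assms)

lemma map_poly_hom_mult:
  fixes f :: "'x::comm_semiring_1 \<Rightarrow> 'y::comm_semiring_1"
  assumes "f 0 = 0" "\<And>x y. f (x + y) = f x + f y" "\<And>x y. f (x * y) = f x * f y"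
  shows "map_poly f (p * r) = map_poly f p * map_poly f r"
  by (rule poly_eqI) (simp add: coeff_map_poly assms coeff_mult hom_sum[of f, OF assms(1,2)])


lemma card_UNIV_pos: "0 < card (UNIV :: 'c::finite set)" by (simp add: card_gt_0_iff)

lemma fermat_field:
  fixes x :: "'c::{finite,field}"
  shows "x ^ card (UNIV :: 'c set) = x"
proof (cases "x = 0")
  case False
  have "x * (\<Prod>y\<in>UNIV-{0}. x * y) = x * x ^ (card (UNIV :: 'c set) - 1) * \<Prod>(UNIV-{0})"
    by (simp add: prod.distrib mult_ac)
  also have "x * x ^ (card (UNIV :: 'c set) - 1) = x ^ Suc (card (UNIV :: 'c set) - 1)"
    by (subst power_Suc) auto
  also have "Suc (card (UNIV :: 'c set) - 1) = card (UNIV :: 'c set)"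
    using card_UNIV_pos[where 'c='c] by auto
  also have "(\<Prod>y\<in>UNIV-{0}. x * y) = (\<Prod>y\<in>UNIV-{0}. y)"
    by (rule prod.reindex_bij_witness[of _ "\<lambda>y. y / x" "\<lambda>y. x * y"]) (use False in auto)
  finally show ?thesis
    by simp
qed (use card_UNIV_pos[where 'c='c] in auto)

lemma fermat_field_pow:
  fixes x :: "'c::{finite,field}"
  shows "x ^ (card (UNIV :: 'c set) ^ k) = x"
  by (induction k) (simp_all add: fermat_field power_mult)

lemma choose_zero_field:
  assumes "0 < k" "k < card (UNIV :: 'c::{finite,field} set)"
  shows "(of_nat (card (UNIV :: 'c set) choose k) :: 'c) = 0"
proof -
  define Q where "Q = card (UNIV :: 'c set)"
  have Q0: "Q > 0" unfolding Q_def using card_UNIV_pos by auto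
  define D :: "'c poly" where "D = [:1,1:] ^ Q - Polynomial.monom 1 Q - 1"
  have cD: "Polynomial.coeff D i = (if i \<le> Q then of_nat (Q choose i) else 0) - (if i = Q then 1 else 0) - (if i = 0 then 1 else 0)" for i
  proof (cases "i \<le> Q")
    case True
    then show ?thesis unfolding D_def by (simp add: coeff_linear_poly_power coeff_monom)
  next
    case False
    have "degree ([:1,1:] ^ Q :: 'c poly) \<le> Q"
      by (rule order.trans[OF degree_power_le]) simp
    then have "Polynomial.coeff ([:1,1:] ^ Q :: 'c poly) i = 0" using False by (intro coeff_eq_0) auto
    then show ?thesis using False unfolding D_def by (simp add: coeff_monom)
  qed
  have degD: "degree D < Q"
  proof (rule degree_lessI)
    show "D \<noteq> 0 \<or> Q > 0" using Q0 by auto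
    show "\<forall>k\<ge>Q. Polynomial.coeff D k = 0" using Q0 by (auto simp: cD)
  qed
  have "D = 0"
  proof (rule poly_eqI_degree[where A = UNIV])
    fix x :: 'c
    have "poly D x = (1 + x) ^ Q - x ^ Q - 1" unfolding D_def by (simp add: poly_monom)
    also have "\<dots> = 0" unfolding Q_def by (simp add: fermat_field)
    finally show "poly D x = poly 0 x" by simp
  qed (use degD Q0 in \<open>auto simp: Q_def\<close>)
  then have "Polynomial.coeff D k = 0" by simp
  then show ?thesis using assms by (simp add: cD Q_def)
qed

locale emb =
  fixes phi :: "'a::{finite,field_gcd} \<Rightarrow> 'b::{finite,field}" and q :: nat
  assumes re: "ring_embedding phi" and qc: "q = card (UNIV :: 'a set)"
begin

lemma phi_add: "phi (x + y) = phi x + phi y" and phi_mult: "phi (x * y) = phi x * phi y"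
  and phi_1: "phi 1 = 1"
  using re unfolding ring_embedding_def by auto

lemma phi_0: "phi 0 = 0"
  using phi_add[of 0 0] by (metis add.right_neutral add_left_cancel)

lemma phi_neg: "phi (- x) = - phi x"
  using phi_add[of x "-x"] by (simp add: phi_0 eq_neg_iff_add_eq_0 add.commute)

lemma phi_diff: "phi (x - y) = phi x - phi y"
  using phi_add[of x "-y"] by (simp add: phi_neg)

lemma phi_eq0: "phi x = 0 \<longleftrightarrow> x = 0"
proof
  assume h: "phi x = 0"
  show "x = 0"
  proof (rule ccontr)
    assume "x \<noteq> 0"
    then have "phi (x * inverse x) = 1" by (simp add: phi_1)
    then show False by (simp add: phi_mult h)
  qed
qed (simp add: phi_0)

lemma phi_inj: "inj phi"
  by (rule injI) (metis phi_diff phi_eq0 right_minus_eq)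

lemma phi_of_nat: "phi (of_nat k) = of_nat k"
  by (induction k) (simp_all add: phi_0 phi_add phi_1)

lemma phi_power: "phi (x ^ k) = phi x ^ k"
  by (induction k) (simp_all add: phi_1 phi_mult)

lemma q_pos: "q > 0" using qc card_UNIV_pos by auto

lemma frob_add: "(x + y :: 'b) ^ q = x ^ q + y ^ q"
proof -
  have "(x + y) ^ q = (\<Sum>k\<le>q. of_nat (q choose k) * x ^ k * y ^ (q - k))"
    by (rule binomial_ring)
  also have "\<dots> = (\<Sum>k\<in>{0,q}. of_nat (q choose k) * x ^ k * y ^ (q - k))"
  proof (intro sum.mono_neutral_right ballI)
    fix k assume "k \<in> {..q} - {0, q}"
    then have k: "0 < k" "k < q" by auto
    have "(of_nat (q choose k) :: 'b) = phi (of_nat (q choose k))" by (simp add: phi_of_nat)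
    also have "\<dots> = 0" using choose_zero_field[of k, where 'c='a] k by (simp add: qc phi_0)
    finally show "of_nat (q choose k) * x ^ k * y ^ (q - k) = (0::'b)" by simp
  qed auto
  finally show ?thesis using q_pos by (simp add: add.commute)
qed

lemma frob_sum: "(sum f A :: 'b) ^ q = (\<Sum>a\<in>A. f a ^ q)"
  by (induction A rule: infinite_finite_induct) (use q_pos in \<open>auto simp: frob_add\<close>)

lemma frob_neg: "(- x :: 'b) ^ q = - (x ^ q)"
proof -
  have "x ^ q + (-x) ^ q = 0" using frob_add[of x "-x"] q_pos by (simp add: power_0_left)
  then show ?thesis by (simp add: eq_neg_iff_add_eq_0 add.commute)
qed

lemma phi_fermat: "phi a ^ q = phi a"
  by (simp add: qc fermat_field flip: phi_power)

end

lemma map_poly_hom_prod: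
  fixes f :: "'x::comm_semiring_1 \<Rightarrow> 'y::comm_semiring_1"
  assumes "f 0 = 0" "\<And>x y. f (x + y) = f x + f y" "\<And>x y. f (x * y) = f x * f y" "f 1 = 1"
  shows "map_poly f (prod g A) = (\<Prod>a\<in>A. map_poly f (g a))"
  by (induction A rule: infinite_finite_induct) (simp_all add: map_poly_hom_mult[OF assms(1-3)] assms(4))

context emb
begin

lemma map_phi_add: "map_poly phi (p + r) = map_poly phi p + map_poly phi r"
  by (rule map_poly_hom_add) (simp_all add: phi_0 phi_add)

lemma map_phi_mult: "map_poly phi (p * r) = map_poly phi p * map_poly phi r"
  by (rule map_poly_hom_mult) (simp_all add: phi_0 phi_add phi_mult)

lemma coeff_map_phi: "Polynomial.coeff (map_poly phi p) i = phi (Polynomial.coeff p i)"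
  by (simp add: coeff_map_poly phi_0)

lemma degree_map_phi: "degree (map_poly phi p) = degree p"
  by (rule degree_map_poly) (simp add: phi_eq0)

lemma map_phi_eq0: "map_poly phi p = 0 \<longleftrightarrow> p = 0"
  by (simp add: map_poly_eq_0_iff phi_0 phi_eq0)

lemma map_phi_inj: "map_poly phi p = map_poly phi r \<Longrightarrow> p = r"
  by (rule poly_eqI) (metis coeff_map_phi injD phi_inj)

lemma lead_map_phi: "lead_coeff (map_poly phi p) = phi (lead_coeff p)"
  by (simp add: degree_map_phi coeff_map_phi)

lemma q_ge2: "q \<ge> 2"
proof -
  have "{0::'a, 1} \<subseteq> UNIV" by simp
  then have "card {0::'a, 1} \<le> card (UNIV :: 'a set)" by (intro card_mono) auto
  then show ?thesis by (simp add: qc)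
qed

lemma fixed_iff: "(y :: 'b) ^ q = y \<longleftrightarrow> y \<in> range phi"
proof
  assume "y \<in> range phi" then show "y ^ q = y" using phi_fermat by auto
next
  assume y: "y ^ q = y"
  define P :: "'b poly" where "P = Polynomial.monom 1 q - [:0, 1:]"
  obtain k where qk: "q = Suc (Suc k)" using q_ge2 by (metis add_2_eq_Suc le_Suc_ex)
  have cP: "Polynomial.coeff P q = 1" by (simp add: P_def coeff_monom qk)
  then have P0: "P \<noteq> 0" by auto
  have dP: "degree P \<le> q"
    unfolding P_def using q_ge2 by (intro order.trans[OF degree_diff_le_max]) (auto simp: degree_monom_eq)
  have S: "{z. poly P z = 0} = {z. z ^ q = z}" by (auto simp: P_def poly_monom)
  have "card {z::'b. z ^ q = z} \<le> q" using card_poly_roots_bound[OF P0] dP S by simp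
  moreover have sub: "range phi \<subseteq> {z. z ^ q = z}" using phi_fermat by auto
  moreover have "card (range phi) = q" using phi_inj qc by (simp add: card_image)
  moreover have "card (range phi) \<le> card {z::'b. z ^ q = z}"
    using sub by (intro card_mono) auto
  ultimately have "range phi = {z. z ^ q = z}"
    by (intro card_subset_eq) auto
  then show "y \<in> range phi" using y by auto
qed

lemma frob_inj: "(x :: 'b) ^ q = y ^ q \<Longrightarrow> x = y"
proof -
  assume h: "x ^ q = y ^ q"
  have "(x - y) ^ q = x ^ q + (- y) ^ q" using frob_add[of x "-y"] by simp
  also have "\<dots> = 0" using h by (simp add: frob_neg)
  finally show "x = y" by simp
qed

lemma frob_poly: "poly (map_poly phi f) (b ^ q) = (poly (map_poly phi f) b) ^ q"
proof -
  have "(poly (map_poly phi f) b) ^ q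
     = (\<Sum>i\<le>degree f. (phi (Polynomial.coeff f i) * b ^ i) ^ q)"
    by (simp add: poly_altdef degree_map_phi coeff_map_phi frob_sum)
  also have "\<dots> = (\<Sum>i\<le>degree f. phi (Polynomial.coeff f i) * (b ^ q) ^ i)"
    by (simp add: power_mult_distrib phi_fermat flip: power_mult) (simp add: mult.commute)
  also have "\<dots> = poly (map_poly phi f) (b ^ q)"
    by (simp add: poly_altdef degree_map_phi coeff_map_phi)
  finally show ?thesis by simp
qed

lemma frob_poly_iter: "poly (map_poly phi f) b = 0 \<Longrightarrow> poly (map_poly phi f) (b ^ (q ^ k)) = 0"
proof (induction k)
  case (Suc k)
  have "b ^ (q ^ Suc k) = (b ^ (q ^ k)) ^ q" by (metis power_Suc2 power_mult)
  then show ?case using Suc q_pos by (simp only: frob_poly) simp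
qed simp

definition conjs :: "'b \<Rightarrow> 'b set" where "conjs b = range (\<lambda>k. b ^ (q ^ k))"

definition MP :: "'b \<Rightarrow> 'b poly" where "MP b = (\<Prod>c\<in>conjs b. [:- c, 1:])"

definition mp :: "'b \<Rightarrow> 'a poly" where "mp b = map_poly (inv_into UNIV phi) (MP b)"

lemma self_in_conj: "b \<in> conjs b"
  unfolding conjs_def by (rule range_eqI[of _ _ 0]) simp

lemma conj_frob: "c \<in> conjs b \<Longrightarrow> c ^ q \<in> conjs b"
proof -
  assume "c \<in> conjs b"
  then obtain k where k: "c = b ^ (q ^ k)" by (auto simp: conjs_def)
  then have "c ^ q = b ^ (q ^ Suc k)" by (metis power_Suc2 power_mult)
  then show ?thesis unfolding conjs_def by (metis rangeI)
qed

lemma conj_frob_image: "(\<lambda>c. c ^ q) ` conjs b = conjs b"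
  by (rule endo_inj_surj) (auto simp: conj_frob inj_on_def intro: frob_inj)

lemma poly_MP: "poly (MP b) z = 0 \<longleftrightarrow> z \<in> conjs b"
  by (simp add: MP_def poly_prod)

lemma degree_MP: "degree (MP b) = card (conjs b)"
  unfolding MP_def by (subst degree_prod_sum_eq) auto

lemma lead_MP: "lead_coeff (MP b) = 1"
  unfolding MP_def by (simp add: lead_coeff_prod)

lemma MP_fixed: "map_poly (\<lambda>x. x ^ q) (MP b) = MP b"
proof -
  have "map_poly (\<lambda>x. x ^ q) (MP b) = (\<Prod>c\<in>conjs b. map_poly (\<lambda>x. x ^ q) [:- c, 1:])"
    unfolding MP_def using q_pos
    by (intro map_poly_hom_prod) (simp_all add: frob_add power_mult_distrib)
  also have "\<dots> = (\<Prod>c\<in>conjs b. [:- (c ^ q), 1:])"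
    using q_pos by (intro prod.cong refl) (simp add: frob_neg map_poly_pCons power_0_left)
  also have "\<dots> = (\<Prod>c\<in>(\<lambda>c. c ^ q) ` conjs b. [:- c, 1:])"
    by (subst prod.reindex) (auto simp: inj_on_def intro: frob_inj)
  also have "\<dots> = MP b" by (simp add: conj_frob_image MP_def)
  finally show ?thesis .
qed

lemma MP_coeff_range: "Polynomial.coeff (MP b) i \<in> range phi"
proof -
  have "Polynomial.coeff (map_poly (\<lambda>x. x ^ q) (MP b)) i = Polynomial.coeff (MP b) i ^ q"
    using q_pos by (simp add: coeff_map_poly)
  then have "Polynomial.coeff (MP b) i ^ q = Polynomial.coeff (MP b) i" using MP_fixed[of b] by simp
  then show ?thesis using fixed_iff by blast
qed

lemma inv_phi_0: "inv_into UNIV phi 0 = 0"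
  by (metis phi_0 inv_f_f phi_inj)

lemma map_phi_mp: "map_poly phi (mp b) = MP b"
  by (rule poly_eqI) (simp add: coeff_map_phi mp_def coeff_map_poly inv_phi_0 f_inv_into_f[OF MP_coeff_range])

lemma degree_mp: "degree (mp b) = card (conjs b)"
  by (metis degree_map_phi map_phi_mp degree_MP)

lemma lead_mp: "lead_coeff (mp b) = 1"
  by (metis lead_map_phi map_phi_mp lead_MP phi_1 injD phi_inj)

lemma mp_nz: "mp b \<noteq> 0" using lead_mp[of b] by auto

lemma poly_mp: "poly (map_poly phi (mp b)) z = 0 \<longleftrightarrow> z \<in> conjs b"
  by (simp add: map_phi_mp poly_MP)

lemma conj_le_degree:
  assumes "r \<noteq> 0" "poly (map_poly phi r) b = 0"
  shows "card (conjs b) \<le> degree r"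
proof -
  have "conjs b \<subseteq> {z. poly (map_poly phi r) z = 0}"
    unfolding conjs_def using frob_poly_iter[OF assms(2)] by auto
  then have "card (conjs b) \<le> card {z. poly (map_poly phi r) z = 0}"
    by (intro card_mono) auto
  also have "\<dots> \<le> degree (map_poly phi r)"
    by (rule card_poly_roots_bound) (simp add: map_phi_eq0 assms)
  finally show ?thesis by (simp add: degree_map_phi)
qed

lemma minpoly_eq: "minpoly phi b = mp b"
  unfolding minpoly_def
proof (rule the_equality)
  show "lead_coeff (mp b) = 1 \<and> poly (map_poly phi (mp b)) b = 0 \<and>
    (\<forall>r. r \<noteq> 0 \<and> poly (map_poly phi r) b = 0 \<longrightarrow> degree (mp b) \<le> degree r)"
    using lead_mp poly_mp self_in_conj conj_le_degree degree_mp by auto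
next
  fix p assume h: "lead_coeff p = 1 \<and> poly (map_poly phi p) b = 0 \<and>
    (\<forall>r. r \<noteq> 0 \<and> poly (map_poly phi r) b = 0 \<longrightarrow> degree p \<le> degree r)"
  then have p0: "p \<noteq> 0" by auto
  have d1: "card (conjs b) \<le> degree p" using conj_le_degree p0 h by auto
  have d2: "degree p \<le> card (conjs b)"
    using h mp_nz poly_mp self_in_conj degree_mp by metis
  have "map_poly phi p = MP b"
  proof (rule poly_eqI_degree_lead_coeff[where n = "card (conjs b)" and A = "conjs b"])
    show "Polynomial.coeff (map_poly phi p) (card (conjs b)) = Polynomial.coeff (MP b) (card (conjs b))"
      using d1 d2 h lead_MP[of b] degree_MP[of b] by (simp add: coeff_map_phi phi_1)
    show "degree (map_poly phi p) \<le> card (conjs b)" using d2 by (simp add: degree_map_phi)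
    show "degree (MP b) \<le> card (conjs b)" by (simp add: degree_MP)
    fix z assume "z \<in> conjs b"
    then show "poly (map_poly phi p) z = poly (MP b) z"
      using h poly_MP frob_poly_iter unfolding conjs_def by auto
  qed simp
  then show "p = mp b" using map_phi_mp map_phi_inj by metis
qed

lemma mp_dvd:
  assumes "poly (map_poly phi r) b = 0"
  shows "mp b dvd r"
proof -
  have e: "r = (r div mp b) * mp b + r mod mp b" by simp
  have "map_poly phi r = map_poly phi (r div mp b) * map_poly phi (mp b) + map_poly phi (r mod mp b)"
    by (metis e map_phi_add map_phi_mult)
  then have "poly (map_poly phi (r mod mp b)) b = 0"
    using assms poly_mp[of b b] self_in_conj[of b] by simp
  moreover have "r mod mp b = 0"
  proof (rule ccontr)
    assume "r mod mp b \<noteq> 0"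
    then have "degree (r mod mp b) < degree (mp b)" using degree_mod_less' mp_nz by auto
    then show False using conj_le_degree[OF \<open>r mod mp b \<noteq> 0\<close>] calculation degree_mp by fastforce
  qed
  then show ?thesis by (simp add: mod_0_imp_dvd)
qed

lemma conj_nonempty: "card (conjs b) \<ge> 1"
  using self_in_conj by (metis One_nat_def Suc_leI card_gt_0_iff empty_iff finite)

lemma mp_irreducible: "irreducible (mp b)"
proof (rule irreducibleI)
  show "mp b \<noteq> 0" by (rule mp_nz)
  show "\<not> is_unit (mp b)" using is_unit_iff_degree[OF mp_nz, of b] degree_mp[of b] self_in_conj[of b]
    by auto
  fix a c assume e: "mp b = a * c"
  then have a0: "a \<noteq> 0" and c0: "c \<noteq> 0" using mp_nz by auto
  have "poly (map_poly phi a) b * poly (map_poly phi c) b = 0"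
    using e poly_mp self_in_conj by (metis map_phi_mult poly_mult)
  then have "poly (map_poly phi a) b = 0 \<or> poly (map_poly phi c) b = 0" by simp
  moreover have "degree (mp b) = degree a + degree c" using e a0 c0 by (simp add: degree_mult_eq)
  ultimately show "is_unit a \<or> is_unit c"
    using conj_le_degree[OF a0, of b] conj_le_degree[OF c0, of b] degree_mp
      is_unit_iff_degree[OF a0] is_unit_iff_degree[OF c0] by auto
qed

lemma mp_prime: "prime (mp b)"
proof -
  have "normalize (mp b) = mp b"
    using lead_mp[of b] by (simp add: normalize_poly_def one_pCons[symmetric])
  then show ?thesis using mp_irreducible by (simp add: prime_def prime_elem_iff_irreducible)
qed

lemma mp_eq_conj: "mp b = mp b' \<Longrightarrow> conjs b = conjs b'"
  using poly_mp by (metis subsetI subset_antisym)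

end

definition Hyp :: "int \<Rightarrow> nat \<Rightarrow> int \<Rightarrow> bool" where
  "Hyp q m T \<longleftrightarrow> q \<ge> 3 \<and> ((even m \<and> m \<ge> 4 \<and> T \<le> q ^ (m div 2)) \<or>
     (odd m \<and> m \<ge> 3 \<and> T + q + 1 \<le> q ^ ((m + 1) div 2)))"

lemma Hyp_TQ:
  assumes "Hyp q m T" "2 * k \<le> m" "T \<ge> 0"
  shows "T * q ^ k \<le> q ^ m"
proof -
  have q: "q \<ge> 3" using assms unfolding Hyp_def by auto
  consider (e) M where "m = 2 * M" "T \<le> q ^ M" | (o) M where "m = 2 * M + 1" "T + q + 1 \<le> q ^ (M + 1)"
  proof -
    define M where "M = m div 2"
    have "even m \<Longrightarrow> m = 2 * M" "odd m \<Longrightarrow> m = 2 * M + 1" "odd m \<Longrightarrow> (m + 1) div 2 = M + 1"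
      unfolding M_def by presburger+
    then show ?thesis using assms(1) that(1)[of M] that(2)[of M] unfolding Hyp_def by (cases "even m") auto
  qed
  then show ?thesis
  proof cases
    case e
    have "q ^ k \<le> q ^ M" using q e assms(2) by (intro power_increasing) auto
    then have "T * q ^ k \<le> q ^ M * q ^ M" using e q assms(3) by (intro mult_mono) auto
    then show ?thesis using e by (simp add: power_add[symmetric] mult_2)
  next
    case o
    have "q ^ k \<le> q ^ M" using q o assms(2) by (intro power_increasing) auto
    moreover have "T \<le> q ^ (M + 1)" using o q by linarith
    ultimately have "T * q ^ k \<le> q ^ (M + 1) * q ^ M" using q assms(3) by (intro mult_mono) auto
    moreover have "m = (M + 1) + M" using o by simp
    ultimately show ?thesis by (simp only: power_add)
  qed
qed


lemma Hyp_cases: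
  assumes "Hyp q m T"
  obtains (e) M where "m = 2 * M" "M \<ge> 2" "T \<le> q ^ M" "q \<ge> 3"
        | (o) M where "m = 2 * M + 1" "M \<ge> 1" "T + q + 1 \<le> q ^ (M + 1)" "q \<ge> 3"
proof -
  define M where "M = m div 2"
  have "even m \<Longrightarrow> m = 2 * M" "odd m \<Longrightarrow> m = 2 * M + 1" "odd m \<Longrightarrow> (m + 1) div 2 = M + 1"
    unfolding M_def by presburger+
  moreover have "even m \<Longrightarrow> m \<ge> 4 \<Longrightarrow> M \<ge> 2" "odd m \<Longrightarrow> m \<ge> 3 \<Longrightarrow> M \<ge> 1" unfolding M_def by presburger+
  ultimately show ?thesis using assms that(1)[of M] that(2)[of M] unfolding Hyp_def by (cases "even m") auto
qed

lemma pow_ge_q: "(q::int) \<ge> 3 \<Longrightarrow> M \<ge> 1 \<Longrightarrow> q ^ M \<ge> q"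
  using power_increasing[of 1 M q] by simp

lemma Hyp_2T:
  assumes "Hyp q m T"
  shows "2 * T < q ^ m + 1"
  using assms
proof (cases rule: Hyp_cases)
  case (e M)
  have X: "q ^ M \<ge> 3" using e pow_ge_q[of q M] by simp
  have "q ^ m = q ^ M * q ^ M" using e by (simp add: power_add[symmetric] mult_2)
  moreover have "q ^ M * q ^ M \<ge> 3 * q ^ M" using X by (intro mult_right_mono) auto
  ultimately show ?thesis using e X by linarith
next
  case (o M)
  have X: "q ^ M \<ge> 3" using o pow_ge_q[of q M] by simp
  have "q ^ m = q * q ^ M * q ^ M" using o by (simp add: power_add[symmetric] mult_2)
  moreover have "(q * q ^ M) * q ^ M \<ge> (q * q ^ M) * 3" using X o by (intro mult_left_mono) auto
  moreover have "q ^ (M + 1) = q * q ^ M" by simp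
  moreover have "q * q ^ M \<ge> 0" using o by simp
  ultimately show ?thesis using o X by linarith
qed


lemma eq_N_impossible:
  assumes H: "Hyp q m T" and k: "1 \<le> k" "2 * k \<le> m"
    and s: "1 \<le> s" "s \<le> T" and t: "1 \<le> t" "t \<le> T" and nq: "\<not> q dvd s"
  shows "s * q ^ k + t \<noteq> q ^ m + 1"
  using H
proof (cases rule: Hyp_cases)
  case (o M)
  define X where "X = q ^ M"
  have X: "X \<ge> 3" using o pow_ge_q[of q M] by (simp add: X_def)
  have qk: "q ^ k \<le> X" unfolding X_def using o k by (intro power_increasing) auto
  have "s * q ^ k \<le> T * X" using s qk o by (intro mult_mono) auto
  moreover have "(T + q + 1) * (X + 1) \<le> (q * X) * (X + 1)"
    using o X by (intro mult_right_mono) (auto simp: X_def)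
  moreover have "q ^ m = q * X * X" using o by (simp add: X_def power_add[symmetric] mult_2)
  ultimately have "s * q ^ k + t \<le> T * X + T" "T * X + T + q * X + q + X + 1 \<le> q * X * X + q * X"
    using t by (auto simp: algebra_simps)
  then show ?thesis using X o \<open>q ^ m = q * X * X\<close> by linarith
next
  case (e M)
  define X where "X = q ^ M"
  have X: "X \<ge> 3" using e pow_ge_q[of q M] by (simp add: X_def)
  have qm: "q ^ m = X * X" using e by (simp add: X_def power_add[symmetric] mult_2)
  show ?thesis
  proof (cases "k < M")
    case True
    define Y where "Y = q ^ (M - 1)"
    have XY: "X = q * Y" unfolding X_def Y_def using e by (simp flip: power_Suc)
    have Y: "Y \<ge> 1" unfolding Y_def using e by simp
    have qk: "q ^ k \<le> Y" unfolding Y_def using e True by (intro power_increasing) auto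
    have "s * q ^ k \<le> X * Y" using s qk e X Y by (intro mult_mono) (auto simp: X_def)
    moreover have "X * X = X * Y * q" using XY by (simp add: algebra_simps)
    moreover have "X * Y * q \<ge> X * Y * 3" using e X Y by (intro mult_left_mono) auto
    moreover have "X * Y \<ge> X * 1" using X Y by (intro mult_left_mono) auto
    ultimately show ?thesis using qm t e X_def by linarith
  next
    case False
    then have kM: "k = M" using k e by auto
    show ?thesis
    proof
      assume eq: "s * q ^ k + t = q ^ m + 1"
      have "s \<ge> X"
      proof (rule ccontr)
        assume "\<not> s \<ge> X"
        then have "s * X \<le> (X - 1) * X" using X by (intro mult_right_mono) auto
        then show False using eq kM qm t e by (simp add: X_def algebra_simps)
      qed
      then have "s = X" using s e by (simp add: X_def)
      moreover have "q dvd X" unfolding X_def using e by (simp add: dvd_power)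
      ultimately show False using nq by simp
    qed
  qed
qed

lemma core1:
  assumes H: "Hyp q m T" and k: "1 \<le> k" "2 * k \<le> m"
    and s: "1 \<le> s" "s \<le> T" and t: "1 \<le> t" "t \<le> T" and nq: "\<not> q dvd t"
  shows "\<not> [s * q ^ k = t] (mod (q ^ m + 1))"
proof
  assume c: "[s * q ^ k = t] (mod (q ^ m + 1))"
  have q3: "q \<ge> 3" using H unfolding Hyp_def by auto
  have f1: "T * q ^ k \<le> q ^ m" using Hyp_TQ[OF H k(2)] s by simp
  have f2: "s * q ^ k \<le> T * q ^ k" using s q3 by (intro mult_right_mono) auto
  have f3: "T \<le> T * q ^ k" using s q3 by (simp add: mult_le_cancel_left1)
  have f4: "s * q ^ k \<ge> 0" using s q3 by simp
  have "s * q ^ k = t"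
    using f1 f2 f3 f4 t by (intro cong_less_imp_eq_int[OF _ _ _ _ c]) linarith+
  moreover have "q dvd s * q ^ k" using k by (simp add: dvd_power)
  ultimately show False using nq by simp
qed

lemma core2:
  assumes H: "Hyp q m T" and k: "1 \<le> k" "2 * k \<le> m"
    and s: "1 \<le> s" "s \<le> T" and t: "1 \<le> t" "t \<le> T" and nq: "\<not> q dvd s"
  shows "\<not> [s * q ^ k + t = 0] (mod (q ^ m + 1))"
proof
  assume c: "[s * q ^ k + t = 0] (mod (q ^ m + 1))"
  have q3: "q \<ge> 3" using H unfolding Hyp_def by auto
  have f1: "T * q ^ k \<le> q ^ m" using Hyp_TQ[OF H k(2)] s by simp
  have f2: "s * q ^ k \<le> T * q ^ k" using s q3 by (intro mult_right_mono) auto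
  have f3: "T \<le> T * q ^ k" using s q3 by (simp add: mult_le_cancel_left1)
  have f4: "s * q ^ k \<ge> 0" using s q3 by simp
  have b0: "s * q ^ k + t \<le> q ^ m + q ^ m" using t f1 f2 f3 f4 by linarith
  have b1: "0 < s * q ^ k + t" using t f4 by linarith
  have b2: "s * q ^ k + t < 2 * (q ^ m + 1)" using b0 by (simp add: algebra_simps)
  note b = b1 b2
  obtain j where j: "s * q ^ k + t = (q ^ m + 1) * j" using c by (auto simp: cong_0_iff)
  have qm: "q ^ m + 1 > 0" using q3 by (simp add: add_pos_nonneg)
  have "j > 0" using b(1) j qm by (metis zero_less_mult_pos)
  moreover have "j < 2"
  proof -
    have "(q ^ m + 1) * j < (q ^ m + 1) * 2" using b(2) j by (simp add: mult.commute)
    then show ?thesis using qm mult_less_cancel_left_pos by blast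
  qed
  ultimately have "j = 1" by auto
  then show False using j eq_N_impossible[OF H k s t nq] by simp
qed


lemma coset_main:
  assumes H: "Hyp q m T" and s: "1 \<le> s" "s \<le> T" and t: "1 \<le> t" "t \<le> T"
    and nqs: "\<not> q dvd s" and nqt: "\<not> q dvd t"
    and c: "[s * q ^ k = t] (mod (q ^ m + 1))"
  shows "s = t \<and> (2 * m) dvd k"
proof -
  define N where "N = q ^ m + 1"
  have m1: "m \<ge> 1" using H unfolding Hyp_def by auto
  have TN: "2 * T < N" using Hyp_2T[OF H] by (simp add: N_def)
  have c1: "[q ^ m = - 1] (mod N)" unfolding N_def by (simp add: cong_iff_dvd_diff)
  have c2: "[q ^ (2 * m) = 1] (mod N)"
  proof -
    have "[q ^ m * q ^ m = (-1) * (-1)] (mod N)" by (rule cong_mult[OF c1 c1])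
    then show ?thesis by (simp add: mult_2 power_add)
  qed
  define r where "r = k mod (2 * m)"
  have kr: "k = 2 * m * (k div (2 * m)) + r" unfolding r_def by simp
  have r2m: "r < 2 * m" unfolding r_def using m1 by simp
  have "[q ^ k = (q ^ (2 * m)) ^ (k div (2 * m)) * q ^ r] (mod N)"
    by (subst kr) (simp add: power_add power_mult)
  also have "[(q ^ (2 * m)) ^ (k div (2 * m)) * q ^ r = 1 ^ (k div (2 * m)) * q ^ r] (mod N)"
    by (intro cong_mult cong_pow c2 cong_refl)
  finally have "[q ^ k = q ^ r] (mod N)" by simp
  then have "[s * q ^ k = s * q ^ r] (mod N)" by (intro cong_mult cong_refl)
  then have cr: "[s * q ^ r = t] (mod N)" using c unfolding N_def[symmetric] by (metis cong_sym cong_trans)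
  show ?thesis
  proof (cases "r < m")
    case True
    show ?thesis
    proof (cases "r = 0")
      case True
      then have "[s = t] (mod N)" using cr by simp
      then have "s = t" using s t TN by (intro cong_less_imp_eq_int) auto
      moreover have "2 * m dvd k" using True r_def by auto
      ultimately show ?thesis by simp
    next
      case False
      show ?thesis
      proof (cases "2 * r \<le> m")
        case True
        then show ?thesis using core1[OF H _ True s t nqt] cr False unfolding N_def by auto
      next
        case False2: False
        define r' where "r' = m - r"
        have r': "1 \<le> r'" "2 * r' \<le> m" using False2 \<open>r < m\<close> unfolding r'_def by auto
        have "[t * q ^ r' = s * q ^ r * q ^ r'] (mod N)" by (intro cong_mult cong_refl cong_sym[OF cr])
        moreover have "s * q ^ r * q ^ r' = s * q ^ m" using \<open>r < m\<close> by (simp add: r'_def mult.assoc flip: power_add)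
        moreover have "[s * q ^ m = s * (-1)] (mod N)" by (intro cong_mult cong_refl c1)
        ultimately have "[t * q ^ r' = - s] (mod N)" by (metis cong_trans mult_minus1_right)
        then have "[t * q ^ r' + s = 0] (mod N)" by (metis cong_add_rcancel diff_add_cancel diff_minus_eq_add diff_self minus_diff_eq add.commute cong_iff_dvd_diff)
        then show ?thesis using core2[OF H r' t s nqt] unfolding N_def by auto
      qed
    qed
  next
    case False
    define r0 where "r0 = r - m"
    have r0: "r0 < m" "r = m + r0" using False r2m unfolding r0_def by auto
    have "[s * q ^ r = s * q ^ r0 * q ^ m] (mod N)" using r0 by (simp add: power_add mult_ac)
    also have "[s * q ^ r0 * q ^ m = s * q ^ r0 * (-1)] (mod N)" by (intro cong_mult cong_refl c1)
    finally have "[- (s * q ^ r0) = t] (mod N)" using cr by (metis cong_sym cong_trans mult_minus1_right)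
    then have c3: "[s * q ^ r0 + t = 0] (mod N)" by (simp add: cong_iff_dvd_diff add.commute) (metis add.commute diff_minus_eq_add dvd_minus_iff minus_diff_eq)
    show ?thesis
    proof (cases "r0 = 0")
      case True
      then have "N dvd s + t" using c3 by (simp add: cong_0_iff)
      moreover have "0 < s + t" "s + t < N" using s t TN by auto
      ultimately show ?thesis using zdvd_imp_le by fastforce
    next
      case False
      show ?thesis
      proof (cases "2 * r0 \<le> m")
        case True
        then show ?thesis using core2[OF H _ True s t nqs] c3 False unfolding N_def by auto
      next
        case False2: False
        define r' where "r' = m - r0"
        have r': "1 \<le> r'" "2 * r' \<le> m" using False2 r0 unfolding r'_def by auto
        have "[(s * q ^ r0 + t) * q ^ r' = 0 * q ^ r'] (mod N)" by (intro cong_mult cong_refl c3)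
        then have "[s * q ^ m + t * q ^ r' = 0] (mod N)" using r0
          by (simp add: r'_def algebra_simps flip: power_add)
        moreover have "[s * q ^ m + t * q ^ r' = s * (-1) + t * q ^ r'] (mod N)"
          by (intro cong_add cong_mult cong_refl c1)
        ultimately have "[- s + t * q ^ r' = 0] (mod N)" by (metis cong_sym cong_trans mult_minus1_right)
        then have "[t * q ^ r' = s] (mod N)" by (simp add: cong_iff_dvd_diff cong_0_iff)
        then show ?thesis using core1[OF H r' t s nqs] unfolding N_def by auto
      qed
    qed
  qed
qed


definition cntR :: "nat \<Rightarrow> nat \<Rightarrow> nat" where
  "cntR q N0 = card {i. i \<le> N0 \<and> i mod q \<noteq> (q - 1) div 2}"

lemma cnt_formula:
  assumes q: "q \<ge> 3" "odd q"
  shows "cntR q N0 = (N0 div q) * (q - 1) + N0 mod q + (if N0 mod q < (q - 1) div 2 then 1 else 0)"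
proof (induction N0)
  case 0
  have "{i. i \<le> 0 \<and> i mod q \<noteq> (q - 1) div 2} = {0}" using q by auto
  moreover have "0 < (q - 1) div 2" using q by auto
  ultimately show ?case by (simp add: cntR_def)
next
  case (Suc N)
  define h where "h = (q - 1) div 2"
  have qh: "q = 2 * h + 1" using q unfolding h_def by presburger
  have S: "{i. i \<le> Suc N \<and> i mod q \<noteq> h} =
     {i. i \<le> N \<and> i mod q \<noteq> h} \<union> (if Suc N mod q \<noteq> h then {Suc N} else {})"
    by (auto simp: le_Suc_eq)
  have cS: "cntR q (Suc N) = cntR q N + (if Suc N mod q \<noteq> h then 1 else 0)"
    unfolding cntR_def h_def[symmetric] S by (auto simp: card_insert_if)
  show ?case
  proof (cases "Suc (N mod q) = q")
    case True
    then have m1: "Suc N mod q = 0" "Suc N div q = Suc (N div q)" by (simp_all add: mod_Suc div_Suc)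
    have "N mod q = q - 1" using True by simp
    moreover have "0 < h" using qh q by auto
    ultimately show ?thesis using cS Suc.IH m1 unfolding h_def[symmetric] using qh
      by (auto simp: algebra_simps)
  next
    case False
    then have m1: "Suc N mod q = Suc (N mod q)" "Suc N div q = N div q" by (simp_all add: mod_Suc div_Suc)
    show ?thesis using cS Suc.IH m1 unfolding h_def[symmetric] by auto
  qed
qed

lemma cnt_ceiling:
  assumes q: "q \<ge> 3" "odd q"
  shows "int (cntR q N0) = \<lceil>real ((2 * N0 + 1) * (q - 1)) / real (2 * q)\<rceil>"
proof -
  define h where "h = (q - 1) div 2"
  define a where "a = N0 div q"
  define b where "b = N0 mod q"
  define e :: nat where "e = (if b < h then 1 else 0)"
  have qh: "q = 2 * h + 1" using q unfolding h_def by presburger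
  have N0: "N0 = a * q + b" unfolding a_def b_def by simp
  have bq: "b < q" unfolding b_def using q by simp
  have z: "cntR q N0 = a * (q - 1) + b + e" unfolding a_def b_def e_def h_def using cnt_formula[OF q] by simp
  have L: "(2 * N0 + 1) * (q - 1) = 4 * a * h * q + 4 * b * h + 2 * h"
    unfolding N0 using qh by (simp add: algebra_simps)
  have R: "2 * q * cntR q N0 = 4 * a * h * q + 4 * h * b + 2 * b + 2 * q * e"
    unfolding z using qh by (simp add: algebra_simps)
  have i1: "(2 * N0 + 1) * (q - 1) \<le> 2 * q * cntR q N0"
    unfolding L R e_def using qh by (cases "b < h") auto
  have i2: "2 * q * cntR q N0 < (2 * N0 + 1) * (q - 1) + 2 * q"
    unfolding L R e_def using bq qh by (cases "b < h") auto
  have qpos: "real (2 * q) > 0" using q by simp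
  show ?thesis
  proof (rule ceiling_unique[symmetric])
    have "real ((2 * N0 + 1) * (q - 1)) \<le> real (2 * q * cntR q N0)" using i1 by linarith
    then show "real ((2 * N0 + 1) * (q - 1)) / real (2 * q) \<le> real_of_int (int (cntR q N0))"
      using qpos by (simp add: divide_le_eq mult.commute)
    have "real (2 * q * cntR q N0) < real ((2 * N0 + 1) * (q - 1)) + real (2 * q)" using i2 by linarith
    then show "real_of_int (int (cntR q N0)) - 1 < real ((2 * N0 + 1) * (q - 1)) / real (2 * q)"
      using qpos by (simp add: less_divide_eq algebra_simps)
  qed
qed


lemma three_pow_ge: "M \<ge> 3 \<Longrightarrow> (3::int) ^ M \<ge> 4 * int M + 2"
proof (induction M rule: nat_induct_at_least)
  case base then show ?case by simp
next
  case (Suc n)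
  then show ?case by simp
qed

lemma dim_pos:
  assumes H: "Hyp q m T" and oq: "odd q" and T1: "T \<ge> 1" and c0: "c \<ge> 0" and cb: "2 * q * c < T * (q - 1) + 2 * q"
  shows "4 * int m * c \<le> q ^ m"
  using H
proof (cases rule: Hyp_cases)
  case (e M)
  define X where "X = q ^ M"
  have qm: "q ^ m = X * X" using e by (simp add: X_def power_add[symmetric] mult_2)
  have X3: "X \<ge> 9"
  proof -
    have "q ^ 2 \<le> q ^ M" using e by (intro power_increasing) auto
    moreover have "q ^ 2 \<ge> 3 ^ 2" using e by (intro power_mono) auto
    ultimately show ?thesis by (simp add: X_def)
  qed
  have A: "4 * M * X * (q - 1) + 8 * M * q \<le> q * X * X"
  proof (cases "X \<ge> 4 * int M + 2")
    case True
    have "X * X \<ge> (4 * M + 2) * X" using True X3 by (intro mult_right_mono) auto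
    then have "X * X \<ge> 4 * M * X + 8 * M" using True X3 by (simp add: algebra_simps)
    then have "q * (X * X) \<ge> q * (4 * M * X + 8 * M)" using e by (intro mult_left_mono) auto
    moreover have "4 * M * X * q \<ge> 4 * M * X * (q - 1)" using X3 by (intro mult_left_mono) auto
    ultimately show ?thesis by (simp add: algebra_simps)
  next
    case False
    have "M = 2"
    proof (rule ccontr)
      assume "M \<noteq> 2"
      then have "M \<ge> 3" using e by auto
      then have "(3::int) ^ M \<le> X" unfolding X_def using e by (intro power_mono) auto
      then show False using three_pow_ge[OF \<open>M \<ge> 3\<close>] False by simp
    qed
    moreover have "q = 3"
    proof (rule ccontr)
      assume "q \<noteq> 3"
      then have "q \<ge> 4" using e by auto
      then have "q * q \<ge> 4 * 4" using mult_mono[of 4 q 4 q] by simp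
      then show False using False \<open>M = 2\<close> by (simp add: X_def power2_eq_square)
    qed
    ultimately show ?thesis by (simp add: X_def)
  qed
  have "2 * q * (8 * M * c) = 8 * M * (2 * q * c)" by (simp add: algebra_simps)
  also have "\<dots> \<le> 8 * M * (T * (q - 1) + 2 * q)" using cb by (intro mult_left_mono) auto
  also have "\<dots> \<le> 8 * M * (X * (q - 1) + 2 * q)"
    using e by (intro mult_left_mono add_right_mono mult_right_mono) (auto simp: X_def)
  also have "\<dots> \<le> 2 * q * (X * X)" using A by (simp add: algebra_simps)
  finally have "8 * M * c \<le> X * X" using e by (simp add: mult_le_cancel_left) (simp add: mult_ac)
  then show ?thesis using qm e by (simp add: mult_ac)
next
  case (o M)
  define X where "X = q ^ M"
  have qm: "q ^ m = q * X * X" using o by (simp add: X_def power_add[symmetric] mult_2)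
  have X3: "X \<ge> 3" using o pow_ge_q[of q M] by (simp add: X_def)
  have TX: "T \<le> q * X - q - 1" using o by (simp add: X_def)
  show ?thesis
  proof (cases "q = 3 \<and> M = 1")
    case True
    then have "T \<le> 5" using TX by (simp add: X_def)
    then have "c \<le> 2" using cb True by simp
    then show ?thesis using True o c0 by simp
  next
    case False
    have B1: "2 * (2 * M + 1) * (q - 1) \<le> q * X"
    proof -
      consider "M = 1" | "M = 2" | "M \<ge> 3" using o by linarith
      then show ?thesis
      proof cases
        case 1
        have "q \<noteq> 3" using False 1 by auto
        then have "q \<ge> 5" using o oq by presburger
        then show ?thesis
        proof (cases "q \<ge> 6")
          case True
          then have "q * q \<ge> 6 * q" by (intro mult_right_mono) auto
          then show ?thesis using 1 by (simp add: X_def)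
        next
          case False
          then have "q = 5" using \<open>q \<ge> 5\<close> by auto
          then show ?thesis using 1 by (simp add: X_def)
        qed
      next
        case 2
        have X2: "q * X = q * q * q" by (simp add: X_def 2 power2_eq_square mult_ac)
        have a1: "q * q \<ge> 3 * q" using o by (intro mult_right_mono) auto
        have a2: "q * q * q \<ge> 3 * q * q" using o by (intro mult_right_mono) auto
        have a3: "q \<ge> 10 \<Longrightarrow> q * q \<ge> 10 * q" by (intro mult_right_mono) auto
        have a4: "q \<ge> 10 \<Longrightarrow> q * q * q \<ge> 10 * q * q" using o by (intro mult_right_mono) auto
        have "3 * q * q = 3 * (q * q)" "10 * q * q = 10 * (q * q)" by auto
        moreover have G: "int (2 * (2 * M + 1)) * (q - 1) = 10 * q - 10" using 2 by simp
        ultimately show ?thesis using X2 a1 a2 a3 a4 by (cases "q \<ge> 10") linarith+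
      next
        case 3
        have "(3::int) ^ M \<le> X" unfolding X_def using o by (intro power_mono) auto
        then have "X \<ge> 4 * M + 2" using three_pow_ge[OF 3] by simp
        then have "q * X \<ge> q * (4 * M + 2)" using o by (intro mult_left_mono) auto
        moreover have "q * (4 * M + 2) \<ge> (q - 1) * (4 * M + 2)" by (intro mult_right_mono) auto
        ultimately show ?thesis by (simp add: algebra_simps)
      qed
    qed
    have B2: "(q * X - q - 1) * (q - 1) + 2 * q \<le> q * X * (q - 1)"
    proof -
      have "q * q \<ge> 3 * q" using o by (intro mult_right_mono) auto
      then have "1 + q * 2 \<le> q * q" using o by linarith
      then show ?thesis by (simp add: algebra_simps)
    qed
    have "2 * q * (4 * (2 * M + 1) * c) = 4 * (2 * M + 1) * (2 * q * c)" by (simp add: algebra_simps)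
    also have "\<dots> \<le> 4 * (2 * M + 1) * (T * (q - 1) + 2 * q)" using cb by (intro mult_left_mono) auto
    also have "\<dots> \<le> 4 * (2 * M + 1) * ((q * X - q - 1) * (q - 1) + 2 * q)"
      using o TX by (intro mult_left_mono add_right_mono mult_right_mono) auto
    also have "\<dots> \<le> 4 * (2 * M + 1) * (q * X * (q - 1))"
      using B2 by (intro mult_left_mono) auto
    also have "\<dots> = 2 * (2 * (2 * M + 1) * (q - 1)) * (q * X)" by (simp add: algebra_simps)
    also have "\<dots> \<le> 2 * (q * X) * (q * X)"
      using B1 X3 o by (intro mult_right_mono mult_left_mono) auto
    also have "\<dots> = 2 * q * (q * X * X)" by (simp add: algebra_simps)
    finally have "4 * (2 * M + 1) * c \<le> q * X * X" using o by (simp add: mult_le_cancel_left)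
    then show ?thesis using qm o by simp
  qed
qed


lemma code_set:
  fixes g P :: "'a::field poly"
  assumes "g dvd P" "P \<noteq> 0" "degree g < degree P"
  shows "{(f * g) mod P | f. True} = {g * r | r. degree r < degree P - degree g}"
proof -
  obtain H where P: "P = g * H" using assms(1) by (auto simp: dvd_def)
  have g0: "g \<noteq> 0" and H0: "H \<noteq> 0" using assms(2) P by auto
  have dH: "degree H = degree P - degree g" using P g0 H0 by (simp add: degree_mult_eq)
  have dH1: "degree H \<ge> 1" using dH assms(3) by simp
  have e: "(f * g) mod P = g * (f mod H)" for f
    unfolding P by (simp add: mult.commute[of f g] mod_mult_mult1)
  show ?thesis
  proof (rule subset_antisym; rule subsetI)
    fix c assume "c \<in> {(f * g) mod P | f. True}"
    then obtain f where "c = g * (f mod H)" using e by auto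
    moreover have "degree (f mod H) < degree H"
      using degree_mod_less[OF H0, of f] dH1 by auto
    ultimately show "c \<in> {g * r | r. degree r < degree P - degree g}" using dH by auto
  next
    fix c assume "c \<in> {g * r | r. degree r < degree P - degree g}"
    then obtain r where r: "c = g * r" "degree r < degree H" using dH by auto
    then have "(r * g) mod P = c" using e mod_poly_less by metis
    then show "c \<in> {(f * g) mod P | f. True}" by auto
  qed
qed

interpretation PV: vector_space "Polynomial.smult :: 'a::field \<Rightarrow> 'a poly \<Rightarrow> 'a poly"
  by unfold_locales (simp_all add: smult_add_right smult_add_left)

lemma code_dim_lemma:
  fixes g :: "'a::field poly"
  assumes g0: "g \<noteq> 0"
  shows "vector_space.dim (Polynomial.smult :: 'a \<Rightarrow> 'a poly \<Rightarrow> 'a poly) {g * r | r. degree r < d} = d"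
proof -
  define B where "B = (\<lambda>j. g * Polynomial.monom 1 j) ` {..<d}"
  have mm: "g * Polynomial.monom a j = Polynomial.smult a (g * Polynomial.monom 1 j)" for a j
    by (metis mult_smult_right smult_monom mult_1_right)
  have inj: "inj_on (\<lambda>j. g * Polynomial.monom 1 j) {..<d}"
  proof (rule inj_onI)
    fix a b assume "g * Polynomial.monom 1 a = g * Polynomial.monom 1 b"
    then have "Polynomial.monom (1::'a) a = Polynomial.monom 1 b" using g0 by simp
    then show "a = b" by (metis monom_eq_iff' one_neq_zero)
  qed
  have cardB: "card B = d" unfolding B_def using inj by (simp add: card_image)
  have sub: "B \<subseteq> {g * r | r. degree r < d}" unfolding B_def by (auto simp: degree_monom_eq)
  have span: "{g * r | r. degree r < d} \<subseteq> PV.span B"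
  proof
    fix c assume "c \<in> {g * r | r. degree r < d}"
    then obtain r where r: "c = g * r" "degree r < d" by auto
    have req: "r = (\<Sum>j<d. Polynomial.monom (Polynomial.coeff r j) j)"
    proof -
      have "d \<ge> 1" using r by simp
      then have "{..<d} = {..d - 1}" by auto
      then show ?thesis using poly_as_sum_of_monoms'[of r "d - 1"] r by simp
    qed
    have "c = g * (\<Sum>j<d. Polynomial.monom (Polynomial.coeff r j) j)" using r(1) req by metis
    also have "\<dots> = (\<Sum>j<d. Polynomial.smult (Polynomial.coeff r j) (g * Polynomial.monom 1 j))"
      by (simp add: sum_distrib_left mm[symmetric])
    finally have "c = (\<Sum>j<d. Polynomial.smult (Polynomial.coeff r j) (g * Polynomial.monom 1 j))" .
    also have "\<dots> \<in> PV.span B"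
      by (intro PV.span_sum PV.span_scale PV.span_base) (auto simp: B_def)
    finally show "c \<in> PV.span B" .
  qed
  have ind: "PV.independent B"
  proof (rule PV.independent_if_scalars_zero)
    show "finite B" unfolding B_def by simp
    fix f x assume s: "(\<Sum>x\<in>B. Polynomial.smult (f x) x) = 0" and x: "x \<in> B"
    then obtain j0 where j0: "j0 < d" "x = g * Polynomial.monom 1 j0" unfolding B_def by auto
    have "(\<Sum>x\<in>B. Polynomial.smult (f x) x) = (\<Sum>j<d. Polynomial.smult (f (g * Polynomial.monom 1 j)) (g * Polynomial.monom 1 j))"
      unfolding B_def using inj by (simp add: sum.reindex)
    also have "\<dots> = g * (\<Sum>j<d. Polynomial.monom (f (g * Polynomial.monom 1 j)) j)"
      by (simp add: sum_distrib_left mm[symmetric])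
    finally have "(\<Sum>j<d. Polynomial.monom (f (g * Polynomial.monom 1 j)) j) = 0" using s g0 by simp
    then have "Polynomial.coeff (\<Sum>j<d. Polynomial.monom (f (g * Polynomial.monom 1 j)) j) j0 = 0" by simp
    then show "f x = 0" using j0 by (simp add: coeff_sum coeff_monom)
  qed
  show ?thesis using PV.dim_unique[OF sub span ind cardB] .
qed


lemma vandermonde_zero:
  fixes y X :: "nat \<Rightarrow> 'b::field"
  assumes fin: "finite S" and inj: "inj_on X S"
    and h: "\<And>j. j < card S \<Longrightarrow> (\<Sum>e\<in>S. y e * X e ^ j) = 0"
    and e0: "e0 \<in> S"
  shows "y e0 = 0"
proof -
  define L where "L = (\<Prod>e\<in>S - {e0}. [:- X e, 1:])"
  have dL: "degree L = card S - 1"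
    unfolding L_def using fin e0 by (subst degree_prod_sum_eq) (auto simp: card_Diff_singleton)
  have cS: "card S \<ge> 1" using fin e0 by (metis One_nat_def Suc_leI card_gt_0_iff empty_iff)
  have "(\<Sum>e\<in>S. y e * poly L (X e)) = (\<Sum>e\<in>S. y e * (\<Sum>j\<le>degree L. Polynomial.coeff L j * X e ^ j))"
    by (simp add: poly_altdef)
  also have "\<dots> = (\<Sum>j\<le>degree L. Polynomial.coeff L j * (\<Sum>e\<in>S. y e * X e ^ j))"
    by (simp add: sum_distrib_left sum_distrib_right mult_ac sum.swap[of _ S])
  also have "\<dots> = 0" using h dL cS by (intro sum.neutral) auto
  finally have s0: "(\<Sum>e\<in>S. y e * poly L (X e)) = 0" .
  have "(\<Sum>e\<in>S. y e * poly L (X e)) = y e0 * poly L (X e0)"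
  proof (rule sum.mono_neutral_right[where S="{e0}", simplified])
    show "finite S" by fact
    show "e0 \<in> S" by fact
    show "\<forall>i\<in>S - {e0}. y i * poly L (X i) = 0"
      unfolding L_def using fin by (auto simp: poly_prod)
  qed
  moreover have "poly L (X e0) \<noteq> 0"
    unfolding L_def using fin inj e0 by (auto simp: poly_prod inj_on_def)
  ultimately show ?thesis using s0 by simp
qed

lemma bch_weight:
  fixes c :: "'b::field poly" and x w :: 'b
  assumes c0: "c \<noteq> 0" and dc: "degree c < n"
    and ord: "\<And>i. 0 < i \<Longrightarrow> i < n \<Longrightarrow> x ^ i \<noteq> 1" and x0: "x \<noteq> 0" and w0: "w \<noteq> 0"
    and roots: "\<And>j. j < D \<Longrightarrow> poly c (w * x ^ j) = 0"
  shows "D < card {i. Polynomial.coeff c i \<noteq> 0}"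
proof (rule ccontr)
  define S where "S = {i. Polynomial.coeff c i \<noteq> 0}"
  assume "\<not> D < card {i. Polynomial.coeff c i \<noteq> 0}"
  then have SD: "card S \<le> D" unfolding S_def by simp
  have Ssub: "S \<subseteq> {..degree c}" unfolding S_def using le_degree by auto
  then have fin: "finite S" using finite_subset by blast
  have "Polynomial.coeff c (degree c) \<noteq> 0" using c0 by simp
  then have ne: "degree c \<in> S" unfolding S_def by simp
  have inj: "inj_on (\<lambda>e. x ^ e) S"
  proof (rule inj_onI)
    fix a b assume ab: "a \<in> S" "b \<in> S" "x ^ a = x ^ b"
    show "a = b"
    proof (rule ccontr)
      assume "a \<noteq> b"
      then consider "a < b" | "b < a" by linarith
      then show False
      proof cases
        case 1
        then have "x ^ b = x ^ a * x ^ (b - a)" by (simp add: power_add[symmetric])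
        then have "x ^ (b - a) = 1" using ab x0 by simp
        moreover have "b < n" using ab Ssub dc by auto
        ultimately show False using ord[of "b - a"] 1 by auto
      next
        case 2
        then have "x ^ a = x ^ b * x ^ (a - b)" by (simp add: power_add[symmetric])
        then have "x ^ (a - b) = 1" using ab x0 by simp
        moreover have "a < n" using ab Ssub dc by auto
        ultimately show False using ord[of "a - b"] 2 by auto
      qed
    qed
  qed
  have h: "(\<Sum>e\<in>S. (Polynomial.coeff c e * w ^ e) * (x ^ e) ^ j) = 0" if j: "j < card S" for j
  proof -
    have "poly c (w * x ^ j) = (\<Sum>e\<le>degree c. Polynomial.coeff c e * (w * x ^ j) ^ e)"
      by (simp add: poly_altdef)
    also have "\<dots> = (\<Sum>e\<in>S. Polynomial.coeff c e * (w * x ^ j) ^ e)"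
      by (rule sum.mono_neutral_right) (use Ssub in \<open>auto simp: S_def\<close>)
    also have "\<dots> = (\<Sum>e\<in>S. (Polynomial.coeff c e * w ^ e) * (x ^ e) ^ j)"
      by (simp add: power_mult_distrib mult_ac flip: power_mult)
    finally show ?thesis using roots[of j] j SD by simp
  qed
  have "Polynomial.coeff c (degree c) * w ^ degree c = 0"
    by (rule vandermonde_zero[OF fin inj h ne])
  then show False using w0 c0 by simp
qed


locale bchloc = emb phi q
  for phi :: "'a::{finite,field_gcd} \<Rightarrow> 'b::{finite,field}" and q :: nat +
  fixes alpha :: 'b and m n l delta :: nat
  assumes oq: "odd q" and m2: "m \<ge> 2" and nd: "n = (q ^ m + 1) div 2"
    and ld: "l = ord (2 * n) q" and cb: "card (UNIV :: 'b set) = q ^ l"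
    and pa: "primitive_element alpha" and d2: "2 \<le> delta"
    and hyp: "(even m \<and> m \<ge> 4 \<and> 2 * delta \<le> q ^ (m div 2) + 3) \<or>
         (odd m \<and> m \<ge> 3 \<and> 2 * delta + q \<le> q ^ ((m + 1) div 2) + 2)"
begin

definition NN :: nat where "NN = 2 * n"
definition beta :: 'b where "beta = alpha ^ ((q ^ l - 1) div NN)"
definition TT :: nat where "TT = 2 * delta - 3"
definition RR :: "nat set" where "RR = {i. i \<le> delta - 2 \<and> i mod q \<noteq> (q - 1) div 2}"

lemma q3: "q \<ge> 3" using q_ge2 oq by presburger

lemma NN_eq: "NN = q ^ m + 1"
proof -
  have "odd (q ^ m)" using oq by simp
  then have "2 * ((q ^ m + 1) div 2) = q ^ m + 1" by presburger
  moreover have "NN = 2 * n" by (simp add: NN_def)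
  ultimately show ?thesis using nd by simp
qed

lemma HypI: "Hyp (int q) m (int TT)"
proof -
  have "even m \<and> m \<ge> 4 \<and> TT \<le> q ^ (m div 2) \<or>
        odd m \<and> m \<ge> 3 \<and> TT + q + 1 \<le> q ^ ((m + 1) div 2)"
    using hyp d2 unfolding TT_def by auto
  moreover have "TT \<le> q ^ k \<Longrightarrow> int TT \<le> int q ^ k" for k
    by (simp flip: of_nat_power)
  moreover have "TT + q + 1 \<le> q ^ k \<Longrightarrow> int TT + int q + 1 \<le> int q ^ k" for k
    by (simp flip: of_nat_power)
  ultimately have "even m \<and> m \<ge> 4 \<and> int TT \<le> int q ^ (m div 2) \<or>
        odd m \<and> m \<ge> 3 \<and> int TT + int q + 1 \<le> int q ^ ((m + 1) div 2)"
    by blast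
  then show ?thesis unfolding Hyp_def using q3 by auto
qed

lemma cop: "coprime NN q"
proof -
  have "coprime (q ^ m + 1) (q ^ m)" by (rule coprime_add_one_left)
  then show ?thesis unfolding NN_eq using m2 by simp
qed

lemma l_pos: "l > 0"
proof -
  have "ord NN q \<noteq> 0" using cop ord_eq_0 by blast
  then show ?thesis using ld NN_def by simp
qed

lemma NN_dvd: "NN dvd q ^ l - 1"
proof -
  have "[q ^ l = 1] (mod NN)" using ord_works[of q NN] ld NN_def by simp
  then show ?thesis by (rule cong_to_1_nat)
qed

lemma NN_gt: "NN > 2"
proof -
  have "q ^ m \<ge> q ^ 1" using m2 q3 by (intro power_increasing) auto
  then show ?thesis using q3 NN_eq by simp
qed

lemma card_b: "card (UNIV :: 'b set) - 1 = q ^ l - 1" using cb by simp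

lemma alpha0: "alpha \<noteq> 0" using pa unfolding primitive_element_def by simp

lemma alpha_order: "alpha ^ (q ^ l - 1) = 1"
proof -
  have ql: "q ^ l \<ge> 1" using q3 by simp
  have "alpha ^ (q ^ l) = alpha" using fermat_field[of alpha] cb by simp
  moreover have "alpha ^ (q ^ l) = alpha * alpha ^ (q ^ l - 1)"
  proof -
    have sq: "q ^ l = Suc (q ^ l - 1)" using ql by simp
    show ?thesis by (subst (1) sq) (simp only: power_Suc)
  qed
  ultimately have "alpha * alpha ^ (q ^ l - 1) = alpha * 1" by simp
  then show ?thesis using alpha0 by simp
qed

lemma alpha_pow1: "alpha ^ e = 1 \<longleftrightarrow> (q ^ l - 1) dvd e"
proof
  assume h: "alpha ^ e = 1"
  define Q where "Q = q ^ l - 1"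
  have "alpha ^ e = (alpha ^ Q) ^ (e div Q) * alpha ^ (e mod Q)"
  proof -
    have eq: "e = Q * (e div Q) + e mod Q" by simp
    show ?thesis by (subst (1) eq) (simp only: power_add power_mult)
  qed
  then have a1: "alpha ^ (e mod Q) = 1" using h alpha_order Q_def by simp
  have "Q > 0"
  proof -
    have "q ^ l \<ge> q ^ 1" using q3 l_pos by (intro power_increasing) auto
    then show ?thesis unfolding Q_def using q3 by simp
  qed
  have "e mod Q = 0"
  proof (rule ccontr)
    assume "e mod Q \<noteq> 0"
    moreover have "e mod Q < Q" using \<open>Q > 0\<close> by simp
    ultimately show False using pa a1
      unfolding primitive_element_def card_b Q_def[symmetric] by auto
  qed
  then show "(q ^ l - 1) dvd e" unfolding Q_def by auto
next
  assume "(q ^ l - 1) dvd e"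
  then obtain k where "e = (q ^ l - 1) * k" by auto
  then show "alpha ^ e = 1" by (simp only: power_mult alpha_order power_one)
qed

lemma beta0: "beta \<noteq> 0" unfolding beta_def using alpha0 by simp

lemma beta_pow1: "beta ^ j = 1 \<longleftrightarrow> NN dvd j"
proof -
  obtain K where K: "q ^ l - 1 = NN * K" using NN_dvd by auto
  have "q ^ l \<ge> q ^ 1" using q3 l_pos by (intro power_increasing) auto
  then have K0: "K > 0" using K q3 by (cases "K = 0") auto
  have NN0: "NN > 0" using NN_gt by simp
  have bd: "(q ^ l - 1) div NN = K" using K NN0 by simp
  have "beta ^ j = alpha ^ (j * K)" unfolding beta_def bd by (simp add: power_mult mult.commute)
  also have "\<dots> = 1 \<longleftrightarrow> NN * K dvd j * K" using alpha_pow1 K by simp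
  also have "\<dots> \<longleftrightarrow> NN dvd j" using K0 by simp
  finally show ?thesis .
qed

lemma beta_eq: "beta ^ a = beta ^ b \<longleftrightarrow> [a = b] (mod NN)"
proof -
  have *: "beta ^ a = beta ^ b \<longleftrightarrow> [a = b] (mod NN)" if ab: "a \<le> b" for a b
  proof -
    have "beta ^ b = beta ^ a * beta ^ (b - a)" using ab by (simp add: power_add[symmetric])
    then have "beta ^ a = beta ^ b \<longleftrightarrow> beta ^ (b - a) = 1" using beta0 by auto
    also have "\<dots> \<longleftrightarrow> NN dvd b - a" by (rule beta_pow1)
    also have "\<dots> \<longleftrightarrow> [a = b] (mod NN)" using ab by (simp add: cong_altdef_nat cong_sym_eq[of a b])
    finally show ?thesis .
  qed
  show ?thesis
  proof (cases "a \<le> b")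
    case True then show ?thesis using * by simp
  next
    case False then show ?thesis using *[of b a] by (auto simp: cong_sym_eq)
  qed
qed

lemma beta_n: "beta ^ n = - 1"
proof -
  have "(beta ^ n) ^ 2 = 1" using beta_pow1[of "n * 2"] by (simp add: NN_def power_mult mult.commute)
  moreover have "beta ^ n \<noteq> 1"
  proof
    assume "beta ^ n = 1"
    then have "2 * n dvd n" using beta_pow1[of n] by (simp add: NN_def)
    moreover have "n > 0" using NN_gt by (simp add: NN_def)
    ultimately show False using dvd_imp_le[of "2 * n" n] by simp
  qed
  ultimately show ?thesis using power2_eq_1_iff by blast
qed

end

lemma qdvd_iff:
  fixes q i :: nat
  assumes "odd q" "q \<ge> 3"
  shows "q dvd (1 + 2 * i) \<longleftrightarrow> i mod q = (q - 1) div 2"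
proof -
  define h where "h = (q - 1) div 2"
  define a where "a = i div q"
  define b where "b = i mod q"
  have qh: "q = 2 * h + 1" using assms unfolding h_def by presburger
  have i: "i = a * q + b" unfolding a_def b_def by simp
  have bq: "b < q" unfolding b_def using assms by simp
  have e1: "1 + 2 * i = (2 * b + 1) + q * (2 * a)" unfolding i by (simp add: algebra_simps)
  have "q dvd q * (2 * a)" by simp
  then have "q dvd (2 * b + 1) + q * (2 * a) \<longleftrightarrow> q dvd (2 * b + 1)" by (rule dvd_add_left_iff)
  then have "q dvd (1 + 2 * i) \<longleftrightarrow> q dvd (2 * b + 1)" by (simp only: e1)
  also have "\<dots> \<longleftrightarrow> 2 * b + 1 = q"
  proof
    assume "q dvd 2 * b + 1"
    then obtain c where c: "2 * b + 1 = q * c" by auto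
    have "c \<noteq> 0" using c by (cases "c = 0") auto
    moreover have "c < 2"
    proof (rule ccontr)
      assume "\<not> c < 2"
      then have "q * c \<ge> q * 2" by (intro mult_left_mono) auto
      then show False using c bq by linarith
    qed
    ultimately have "c = 1" by auto
    then show "2 * b + 1 = q" using c by simp
  qed auto
  also have "\<dots> \<longleftrightarrow> b = h" using qh by auto
  finally show ?thesis unfolding b_def h_def .
qed

context bchloc
begin

abbreviation ff :: "nat \<Rightarrow> 'a poly" where "ff i \<equiv> mp (beta ^ (1 + 2 * i))"

lemma fermat_b: "(b :: 'b) ^ (q ^ l) = b"
  using fermat_field[of b] cb by simp

lemma conj_sub: "c \<in> conjs b \<Longrightarrow> conjs c \<subseteq> conjs b"
proof
  fix z assume c: "c \<in> conjs b" and z: "z \<in> conjs c"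
  obtain k where k: "c = b ^ (q ^ k)" using c by (auto simp: conjs_def)
  obtain j where j: "z = c ^ (q ^ j)" using z by (auto simp: conjs_def)
  have "z = b ^ (q ^ (k + j))" unfolding j k by (simp add: power_mult power_add)
  then show "z \<in> conjs b" by (auto simp: conjs_def)
qed

lemma conj_q: "conjs (b ^ q) = conjs b"
proof
  have "b ^ q \<in> conjs b" unfolding conjs_def by (rule range_eqI[of _ _ 1]) simp
  then show "conjs (b ^ q) \<subseteq> conjs b" by (rule conj_sub)
  have "b = (b ^ q) ^ (q ^ (l - 1))"
    using fermat_b[of b] l_pos by (simp add: power_mult[symmetric] power_Suc[symmetric] del: power_Suc)
  then have "b \<in> conjs (b ^ q)" unfolding conjs_def by (metis rangeI)
  then show "conjs b \<subseteq> conjs (b ^ q)" by (rule conj_sub)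
qed

lemma mp_conjs_eq: "conjs b = conjs b' \<Longrightarrow> mp b = mp b'"
  unfolding mp_def MP_def by simp

lemma beta_conj: "z \<in> conjs (beta ^ s) \<longleftrightarrow> (\<exists>k. z = beta ^ (s * q ^ k))"
  unfolding conjs_def by (auto simp: power_mult)

lemma RR_props:
  assumes "i \<in> RR"
  shows "1 \<le> 1 + 2 * i" "1 + 2 * i \<le> TT" "\<not> q dvd (1 + 2 * i)"
  using assms qdvd_iff[OF oq q3, of i] d2 unfolding RR_def TT_def by auto

lemma coset_nat:
  assumes i: "i \<in> RR" and j: "j \<in> RR" and c: "[(1 + 2 * i) * q ^ k = 1 + 2 * j] (mod NN)"
  shows "i = j \<and> (2 * m) dvd k"
proof -
  have "[int ((1 + 2 * i) * q ^ k) = int (1 + 2 * j)] (mod int NN)" using c by (simp only: cong_int_iff)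
  then have c': "[int (1 + 2 * i) * int q ^ k = int (1 + 2 * j)] (mod int q ^ m + 1)"
    by (simp add: NN_eq algebra_simps)
  have s1: "1 \<le> int (1 + 2 * i)" "int (1 + 2 * i) \<le> int TT" "\<not> int q dvd int (1 + 2 * i)"
    using RR_props[OF i] by (simp_all only: of_nat_le_iff int_dvd_int_iff) simp
  have t1: "1 \<le> int (1 + 2 * j)" "int (1 + 2 * j) \<le> int TT" "\<not> int q dvd int (1 + 2 * j)"
    using RR_props[OF j] by (simp_all only: of_nat_le_iff int_dvd_int_iff) simp
  have "int (1 + 2 * i) = int (1 + 2 * j) \<and> (2 * m) dvd k"
    by (rule coset_main[OF HypI s1(1,2) t1(1,2) s1(3) t1(3) c'])
  then show ?thesis by simp
qed

lemma q2m: "[q ^ (2 * m) = 1] (mod NN)"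
proof -
  have b: "[q ^ m + 1 = 0] (mod NN)" by (simp add: NN_eq cong_0_iff)
  have "[q ^ m * (q ^ m + 1) = q ^ m * 0] (mod NN)" by (intro cong_mult cong_refl b)
  moreover have "q ^ m * (q ^ m + 1) = q ^ m + q ^ (2 * m)"
    by (simp add: distrib_left mult_2 power_add)
  ultimately have "[q ^ m + q ^ (2 * m) = 0] (mod NN)" by simp
  then have "[q ^ m + q ^ (2 * m) = q ^ m + 1] (mod NN)" using b by (metis cong_sym cong_trans)
  then show ?thesis by (simp only: cong_add_lcancel_nat)
qed

lemma q_pow_mod: "[q ^ k = q ^ (k mod (2 * m))] (mod NN)"
proof -
  have "q ^ k = (q ^ (2 * m)) ^ (k div (2 * m)) * q ^ (k mod (2 * m))"
  proof -
    have eq: "k = 2 * m * (k div (2 * m)) + k mod (2 * m)" by simp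
    show ?thesis by (subst (1) eq) (simp only: power_add power_mult)
  qed
  also have "[\<dots> = 1 ^ (k div (2 * m)) * q ^ (k mod (2 * m))] (mod NN)"
    by (intro cong_mult cong_pow q2m cong_refl)
  finally show ?thesis by simp
qed

lemma card_conj:
  assumes i: "i \<in> RR"
  shows "card (conjs (beta ^ (1 + 2 * i))) = 2 * m"
proof -
  define s where "s = 1 + 2 * i"
  have img: "conjs (beta ^ s) = (\<lambda>k. beta ^ (s * q ^ k)) ` {..<2 * m}"
  proof
    show "conjs (beta ^ s) \<subseteq> (\<lambda>k. beta ^ (s * q ^ k)) ` {..<2 * m}"
    proof
      fix z assume "z \<in> conjs (beta ^ s)"
      then obtain k where k: "z = beta ^ (s * q ^ k)" using beta_conj by auto
      have "[s * q ^ k = s * q ^ (k mod (2 * m))] (mod NN)" by (intro cong_mult cong_refl q_pow_mod)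
      then have "z = beta ^ (s * q ^ (k mod (2 * m)))" using k beta_eq by simp
      moreover have "k mod (2 * m) < 2 * m" using m2 by simp
      ultimately show "z \<in> (\<lambda>k. beta ^ (s * q ^ k)) ` {..<2 * m}" by auto
    qed
    show "(\<lambda>k. beta ^ (s * q ^ k)) ` {..<2 * m} \<subseteq> conjs (beta ^ s)" using beta_conj by auto
  qed
  have inj: "inj_on (\<lambda>k. beta ^ (s * q ^ k)) {..<2 * m}"
  proof -
    have *: False if ab: "a < b" "b < 2 * m" "beta ^ (s * q ^ a) = beta ^ (s * q ^ b)" for a b
    proof -
      have "[s * q ^ a = s * q ^ b] (mod NN)" using ab beta_eq by simp
      moreover have "s * q ^ b = (s * q ^ (b - a)) * q ^ a" using ab by (simp add: mult.assoc flip: power_add)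
      ultimately have "[s * 1 * q ^ a = (s * q ^ (b - a)) * q ^ a] (mod NN)" by simp
      moreover have "coprime (q ^ a) NN" using cop by (simp add: coprime_commute)
      ultimately have "[s * 1 = s * q ^ (b - a)] (mod NN)" by (simp only: cong_mult_rcancel_nat)
      then have "[(1 + 2 * i) * q ^ (b - a) = 1 + 2 * i] (mod NN)" unfolding s_def by (simp add: cong_sym_eq)
      then have "2 * m dvd (b - a)" using coset_nat[OF i i] by blast
      moreover have "0 < b - a" "b - a < 2 * m" using ab by auto
      ultimately show False by (simp add: nat_dvd_not_less)
    qed
    show ?thesis
    proof (rule inj_onI)
      fix a b assume "a \<in> {..<2 * m}" "b \<in> {..<2 * m}" "beta ^ (s * q ^ a) = beta ^ (s * q ^ b)"
      then show "a = b" using *[of a b] *[of b a] by (metis lessThan_iff linorder_neqE_nat)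
    qed
  qed
  show ?thesis unfolding s_def[symmetric] img using inj by (simp add: card_image)
qed

end

context bchloc
begin

lemma ff_inj:
  assumes i: "i \<in> RR" and j: "j \<in> RR" and e: "ff i = ff j"
  shows "i = j"
proof -
  have "conjs (beta ^ (1 + 2 * i)) = conjs (beta ^ (1 + 2 * j))" using e by (rule mp_eq_conj)
  then have "beta ^ (1 + 2 * j) \<in> conjs (beta ^ (1 + 2 * i))" using self_in_conj by simp
  then obtain k where "beta ^ (1 + 2 * j) = beta ^ ((1 + 2 * i) * q ^ k)" using beta_conj by blast
  then have "[1 + 2 * j = (1 + 2 * i) * q ^ k] (mod NN)" by (simp only: beta_eq)
  then have "[(1 + 2 * i) * q ^ k = 1 + 2 * j] (mod NN)" by (rule cong_sym)
  then show ?thesis using coset_nat[OF i j] by blast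
qed

lemma h_pos: "(q - 1) div 2 \<ge> 1" using q3 by auto

lemma zero_RR: "0 \<in> RR" using h_pos unfolding RR_def by auto

lemma finite_RR: "finite RR" unfolding RR_def by simp

lemma reduce: "i \<le> delta - 2 \<Longrightarrow> \<exists>j\<in>RR. ff i = ff j"
proof (induction i rule: less_induct)
  case (less i)
  show ?case
  proof (cases "i \<in> RR")
    case True then show ?thesis by blast
  next
    case False
    define h where "h = (q - 1) div 2"
    define k where "k = i div q"
    have qh: "q = 2 * h + 1" using oq q3 unfolding h_def by presburger
    have im: "i mod q = h" using False less.prems unfolding RR_def h_def by auto
    have i: "i = k * q + h" unfolding k_def using im by (metis div_mult_mod_eq)
    have s: "1 + 2 * i = q * (1 + 2 * k)" unfolding i using qh by (simp add: algebra_simps)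
    have "k * 1 < k * q + h" proof - have "k * 1 \<le> k * q" using q3 by (intro mult_left_mono) auto
      then show ?thesis using h_pos h_def by linarith qed
    then have ki: "k < i" using i by simp
    have bq: "beta ^ (1 + 2 * i) = (beta ^ (1 + 2 * k)) ^ q" unfolding s by (simp only: power_mult[symmetric] mult.commute)
    have "ff i = ff k" by (rule mp_conjs_eq) (simp only: bq conj_q)
    moreover obtain j where "j \<in> RR" "ff k = ff j" using less.IH[OF ki] ki less.prems by auto
    ultimately show ?thesis by auto
  qed
qed

lemma img_eq: "ff ` {0..delta - 2} = ff ` RR"
proof
  show "ff ` {0..delta - 2} \<subseteq> ff ` RR" using reduce by fastforce
  show "ff ` RR \<subseteq> ff ` {0..delta - 2}" unfolding RR_def by auto
qed

definition gg :: "'a poly" where "gg = (\<Prod>i\<in>RR. ff i)"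

lemma lead_gg: "lead_coeff gg = 1"
  unfolding gg_def by (simp add: lead_coeff_prod lead_mp)

lemma gg_nz: "gg \<noteq> 0" using lead_gg by auto

lemma gen_eq: "Lcm (ff ` {0..delta - 2}) = gg"
proof -
  have "Lcm (ff ` RR) = normalize (\<Prod>(ff ` RR))"
  proof (rule Lcm_coprime)
    show "finite (ff ` RR)" using finite_RR by simp
    show "ff ` RR \<noteq> {}" using zero_RR by auto
    fix a b assume "a \<in> ff ` RR" "b \<in> ff ` RR" "a \<noteq> b"
    then show "coprime a b" using mp_prime primes_coprime by blast
  qed
  also have "\<Prod>(ff ` RR) = gg"
  proof -
    have inj: "inj_on (\<lambda>i. ff i) RR" by (rule inj_onI) (rule ff_inj)
    show ?thesis unfolding gg_def by (simp only: prod.reindex[OF inj] comp_def)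
  qed
  also have "normalize gg = gg"
    using lead_gg by (simp add: normalize_poly_def one_pCons[symmetric])
  finally show ?thesis using img_eq by simp
qed

lemma bch_gen: "bch_generator phi beta delta = gg"
  unfolding bch_generator_def minpoly_eq using gen_eq by simp

lemma deg_gg: "degree gg = 2 * m * card RR"
proof -
  have "degree gg = (\<Sum>i\<in>RR. degree (ff i))"
    unfolding gg_def by (rule degree_prod_sum_eq) (simp add: mp_nz)
  also have "\<dots> = (\<Sum>i\<in>RR. 2 * m)" by (rule sum.cong[OF refl]) (simp only: degree_mp card_conj)
  finally show ?thesis by simp
qed

lemma map_phi_power: "map_poly phi (p ^ k) = (map_poly phi p) ^ k"
  by (induction k) (simp_all add: map_phi_mult phi_1)

definition PP :: "'a poly" where "PP = [:0, 1:] ^ n + 1"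

lemma map_PP: "map_poly phi PP = [:0, 1:] ^ n + 1"
  unfolding PP_def by (simp add: map_phi_add map_phi_power phi_0 phi_1 map_poly_pCons)

lemma poly_PP_odd: "odd s \<Longrightarrow> poly (map_poly phi PP) (beta ^ s) = 0"
proof -
  assume "odd s"
  have "(beta ^ s) ^ n = (beta ^ n) ^ s" by (simp add: power_mult[symmetric] mult.commute)
  then show ?thesis using \<open>odd s\<close> by (simp add: map_PP beta_n)
qed

lemma gg_dvd_PP: "gg dvd PP"
proof -
  have "Lcm (ff ` {0..delta - 2}) dvd PP"
  proof (rule Lcm_least)
    fix b assume "b \<in> ff ` {0..delta - 2}"
    then obtain i where "b = ff i" by auto
    then show "b dvd PP" by (simp only:) (rule mp_dvd, rule poly_PP_odd, simp)
  qed
  then show ?thesis using gen_eq by simp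
qed

lemma degree_PP: "degree PP = n"
proof -
  have "n > 0" using NN_gt by (simp add: NN_def)
  then show ?thesis unfolding PP_def by (simp add: degree_add_eq_left degree_linear_power)
qed

lemma roots_gg:
  assumes "i \<le> delta - 2" "c \<in> conjs (beta ^ (1 + 2 * i))"
  shows "poly (map_poly phi gg) c = 0"
proof -
  have "ff i dvd gg" unfolding gen_eq[symmetric] using assms(1) by (intro dvd_Lcm) auto
  then obtain r where "gg = ff i * r" by auto
  then have "map_poly phi gg = map_poly phi (ff i) * map_poly phi r" by (simp add: map_phi_mult)
  then show ?thesis using poly_mp assms(2) by simp
qed

end

lemma cnt_bound:
  assumes q: "q \<ge> 3" "odd q"
  shows "2 * q * cntR q N0 < (2 * N0 + 1) * (q - 1) + 2 * q"
proof -
  define h where "h = (q - 1) div 2"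
  define a where "a = N0 div q"
  define b where "b = N0 mod q"
  define e :: nat where "e = (if b < h then 1 else 0)"
  have qh: "q = 2 * h + 1" using q unfolding h_def by presburger
  have N0: "N0 = a * q + b" unfolding a_def b_def by simp
  have bq: "b < q" unfolding b_def using q by simp
  have z: "cntR q N0 = a * (q - 1) + b + e" unfolding a_def b_def e_def h_def using cnt_formula[OF q] by simp
  have L: "(2 * N0 + 1) * (q - 1) = 4 * a * h * q + 4 * b * h + 2 * h"
    unfolding N0 using qh by (simp add: algebra_simps)
  have R: "2 * q * cntR q N0 = 4 * a * h * q + 4 * h * b + 2 * b + 2 * q * e"
    unfolding z using qh by (simp add: algebra_simps)
  show ?thesis unfolding L R e_def using bq qh by (cases "b < h") auto
qed

context bchloc
begin

lemma card_RR: "card RR = cntR q (delta - 2)"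
  unfolding RR_def cntR_def by simp

lemma TT_eq: "2 * (delta - 2) + 1 = TT" unfolding TT_def using d2 by simp

lemma deg_lt: "2 * m * card RR < n"
proof -
  have cb: "2 * q * card RR < TT * (q - 1) + 2 * q"
    using cnt_bound[OF q3 oq, of "delta - 2"] by (simp only: card_RR TT_eq)
  have "2 * int q * int (card RR) < int TT * (int q - 1) + 2 * int q"
  proof -
    have "int (2 * q * card RR) < int (TT * (q - 1) + 2 * q)" using cb by linarith
    then show ?thesis using q3 by (simp add: of_nat_diff)
  qed
  moreover have "int TT \<ge> 1" using d2 unfolding TT_def by simp
  ultimately have "4 * int m * int (card RR) \<le> int q ^ m"
    by (intro dim_pos[OF HypI]) (use oq in auto)
  then have "int (4 * m * card RR) \<le> int (q ^ m)" by (simp add: of_nat_power)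
  then have "4 * m * card RR \<le> q ^ m" by (simp only: of_nat_le_iff)
  then show ?thesis using NN_eq unfolding NN_def by linarith
qed

lemma deg_gg_lt: "degree gg < degree PP" using deg_lt deg_gg degree_PP by simp

lemma PP_nz: "PP \<noteq> 0" using degree_PP deg_gg_lt by auto

lemma code_eq: "negacyclic_bch phi beta n delta = {gg * r | r. degree r < n - degree gg}"
  unfolding negacyclic_bch_def negacyclic_code_def bch_gen PP_def[symmetric]
  using code_set[OF gg_dvd_PP PP_nz deg_gg_lt] degree_PP by simp

lemma dim_eq: "code_dim (negacyclic_bch phi beta n delta) = n - 2 * m * card RR"
  unfolding code_eq code_dim_def using code_dim_lemma[OF gg_nz] deg_gg by simp

lemma ceil_eq: "\<lceil>real ((2 * delta - 3) * (q - 1)) / real (2 * q)\<rceil> = int (card RR)"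
proof -
  have e: "2 * delta - 3 = 2 * (delta - 2) + 1" using d2 by simp
  show ?thesis by (simp only: e card_RR cnt_ceiling[OF q3 oq])
qed

lemma dim_final: "int (code_dim (negacyclic_bch phi beta n delta)) =
   int n - 2 * int m * \<lceil>real ((2 * delta - 3) * (q - 1)) / real (2 * q)\<rceil>"
  unfolding dim_eq ceil_eq using deg_lt by (simp add: of_nat_diff)

end

context bchloc
begin

definition sp :: bool where "sp \<longleftrightarrow> delta mod q = (q + 1) div 2"
definition EE :: nat where "EE = (if sp then 2 * delta - 1 else 2 * delta - 3)"

lemma Zmem:
  assumes "i \<le> delta - 2" "[e = (1 + 2 * i) * q ^ k] (mod NN)"
  shows "poly (map_poly phi gg) (beta ^ e) = 0"
proof -
  have "beta ^ e = beta ^ ((1 + 2 * i) * q ^ k)" using assms(2) by (simp only: beta_eq)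
  then have "beta ^ e \<in> conjs (beta ^ (1 + 2 * i))" using beta_conj by blast
  then show ?thesis by (rule roots_gg[OF assms(1)])
qed

lemma negpart:
  assumes "s + e = NN"
  shows "[e = s * q ^ m] (mod NN)"
proof -
  have "[e + s = 0] (mod NN)" using assms by (simp add: cong_0_iff add.commute)
  moreover have "[s * q ^ m + s = 0] (mod NN)"
  proof -
    have "s * q ^ m + s = s * NN" by (simp add: NN_eq algebra_simps)
    then show ?thesis by (simp add: cong_0_iff)
  qed
  ultimately have "[e + s = s * q ^ m + s] (mod NN)" by (metis cong_sym cong_trans)
  then show ?thesis by (simp only: cong_add_rcancel_nat)
qed

lemma NN10: "NN \<ge> 10"
proof -
  have "q ^ m \<ge> q ^ 2" using m2 q3 by (intro power_increasing) auto
  moreover have "q ^ 2 \<ge> 3 ^ 2" using q3 by (intro power_mono) auto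
  ultimately show ?thesis using NN_eq by simp
qed

lemma TT_NN: "2 * TT < NN"
proof -
  have "2 * int TT < int q ^ m + 1" using Hyp_2T[OF HypI] .
  then have "int (2 * TT) < int (q ^ m + 1)" by (simp add: of_nat_power)
  then show ?thesis using NN_eq by linarith
qed

lemma EE_props: "odd EE" "EE < NN" "EE \<le> TT + 2" "TT \<le> EE"
  using d2 TT_NN NN10 unfolding EE_def TT_def by auto

lemma sp_factor:
  assumes sp
  obtains t where "t \<le> delta - 2" "2 * delta - 1 = (1 + 2 * t) * q"
proof -
  define h where "h = (q - 1) div 2"
  define t where "t = delta div q"
  have qh: "q = 2 * h + 1" using oq q3 unfolding h_def by presburger
  have dm: "delta mod q = h + 1" using assms unfolding sp_def h_def using qh by simp
  have d: "delta = t * q + h + 1" unfolding t_def using dm by (metis div_mult_mod_eq add.assoc)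
  have "2 * delta - 1 = (1 + 2 * t) * q" unfolding d using qh by (simp add: algebra_simps)
  moreover have "t \<le> delta - 2"
  proof -
    have "t * 1 \<le> t * q" using q3 by (intro mult_left_mono) auto
    moreover have "h \<ge> 1" using h_pos h_def by simp
    ultimately show ?thesis using d by linarith
  qed
  ultimately show ?thesis using that by blast
qed

lemma odd_root:
  assumes "odd s" "1 \<le> s" "s \<le> EE"
  shows "poly (map_poly phi gg) (beta ^ s) = 0 \<and> poly (map_poly phi gg) (beta ^ (NN - s)) = 0"
proof -
  have sN: "s < NN" using assms EE_props by linarith
  show ?thesis
  proof (cases "s \<le> TT")
    case True
    define i where "i = (s - 1) div 2"
    have si: "s = 1 + 2 * i" unfolding i_def using assms by presburger
    have i: "i \<le> delta - 2" using True si unfolding TT_def by simp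
    have r1: "poly (map_poly phi gg) (beta ^ s) = 0" using Zmem[OF i, of s 0] si by simp
    have "[NN - s = s * q ^ m] (mod NN)" using sN by (intro negpart) simp
    then have r2: "poly (map_poly phi gg) (beta ^ (NN - s)) = 0" using Zmem[OF i, of "NN - s" m] si by simp
    show ?thesis using r1 r2 by simp
  next
    case False
    have spv: "sp" using False assms unfolding EE_def TT_def by (auto split: if_splits)
    then have "s \<le> 2 * delta - 1" "\<not> s \<le> 2 * delta - 3" using assms False unfolding EE_def TT_def by auto
    then have "s = 2 * delta - 1" using assms(1) d2 by presburger
    note this spv
    then obtain t where t: "t \<le> delta - 2" "s = (1 + 2 * t) * q" using sp_factor by metis
    have r1: "poly (map_poly phi gg) (beta ^ s) = 0" using Zmem[OF t(1), of s 1] t(2) by simp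
    have "[NN - s = s * q ^ m] (mod NN)" using sN by (intro negpart) simp
    moreover have "s * q ^ m = (1 + 2 * t) * q ^ (m + 1)" using t(2) by (simp add: algebra_simps)
    ultimately have r2: "poly (map_poly phi gg) (beta ^ (NN - s)) = 0" using Zmem[OF t(1), of "NN - s" "m + 1"] by simp
    show ?thesis using r1 r2 by simp
  qed
qed

lemma run_roots:
  assumes j: "j < EE + 1"
  shows "poly (map_poly phi gg) (beta ^ (NN - EE) * (beta ^ 2) ^ j) = 0"
proof -
  have e: "beta ^ (NN - EE) * (beta ^ 2) ^ j = beta ^ (NN - EE + 2 * j)"
    by (simp add: power_add power_mult)
  show ?thesis
  proof (cases "2 * j < EE")
    case True
    have "NN - EE + 2 * j = NN - (EE - 2 * j)" using True EE_props by simp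
    moreover have "odd (EE - 2 * j)" using EE_props True by simp
    ultimately show ?thesis unfolding e using odd_root[of "EE - 2 * j"] True by simp
  next
    case False
    then have "2 * j > EE" using EE_props by (metis dvd_triv_left le_neq_implies_less not_less)
    then have "NN - EE + 2 * j = NN + (2 * j - EE)" using EE_props by simp
    moreover have "beta ^ (NN + (2 * j - EE)) = beta ^ (2 * j - EE)" by (simp only: beta_eq) (simp add: cong_def)
    moreover have "odd (2 * j - EE)" "1 \<le> 2 * j - EE" "2 * j - EE \<le> EE"
      using EE_props \<open>2 * j > EE\<close> j by auto
    ultimately show ?thesis unfolding e using odd_root[of "2 * j - EE"] by simp
  qed
qed

end

context bchloc
begin

lemma weight_bound:
  assumes c1: "c1 \<in> negacyclic_bch phi beta n delta" and c2: "c2 \<in> negacyclic_bch phi beta n delta"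
    and ne: "c1 \<noteq> c2"
  shows "EE + 2 \<le> hamming_dist n c1 c2"
proof -
  obtain r1 where r1: "c1 = gg * r1" "degree r1 < n - degree gg" using c1 unfolding code_eq by auto
  obtain r2 where r2: "c2 = gg * r2" "degree r2 < n - degree gg" using c2 unfolding code_eq by auto
  define d where "d = r1 - r2"
  define c where "c = gg * d"
  have d0: "d \<noteq> 0" using ne r1 r2 unfolding d_def by auto
  have dd: "degree d < n - degree gg"
    unfolding d_def using r1 r2 degree_diff_le_max[of r1 r2] by linarith
  have c0: "c \<noteq> 0" unfolding c_def using d0 gg_nz by simp
  have dc: "degree c < n" unfolding c_def using d0 gg_nz dd by (simp add: degree_mult_eq)
  have cc: "c = c1 - c2" unfolding c_def d_def r1 r2 by (simp add: algebra_simps)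
  have hd: "hamming_dist n c1 c2 = card {i. Polynomial.coeff (map_poly phi c) i \<noteq> 0}"
  proof -
    have "{i. i < n \<and> Polynomial.coeff c1 i \<noteq> Polynomial.coeff c2 i} = {i. Polynomial.coeff c i \<noteq> 0}"
    proof (rule subset_antisym; rule subsetI)
      fix i assume "i \<in> {i. Polynomial.coeff c i \<noteq> 0}"
      then have "Polynomial.coeff c i \<noteq> 0" by simp
      moreover then have "i \<le> degree c" by (rule le_degree)
      ultimately show "i \<in> {i. i < n \<and> Polynomial.coeff c1 i \<noteq> Polynomial.coeff c2 i}"
        using dc cc by auto
    next
      fix i assume "i \<in> {i. i < n \<and> Polynomial.coeff c1 i \<noteq> Polynomial.coeff c2 i}"
      then show "i \<in> {i. Polynomial.coeff c i \<noteq> 0}" using cc by auto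
    qed
    then show ?thesis unfolding hamming_dist_def by (simp add: coeff_map_phi phi_eq0)
  qed
  have "EE + 1 < card {i. Polynomial.coeff (map_poly phi c) i \<noteq> 0}"
  proof (rule bch_weight[where n = n and x = "beta ^ 2" and w = "beta ^ (NN - EE)"])
    show "map_poly phi c \<noteq> 0" using c0 by (simp add: map_phi_eq0)
    show "degree (map_poly phi c) < n" using dc by (simp add: degree_map_phi)
    show "beta ^ 2 \<noteq> 0" "beta ^ (NN - EE) \<noteq> 0" using beta0 by auto
    fix i assume i: "0 < i" "i < n"
    show "(beta ^ 2) ^ i \<noteq> 1"
    proof
      assume "(beta ^ 2) ^ i = 1"
      then have "beta ^ (2 * i) = 1" by (simp only: power_mult)
      then have "NN dvd 2 * i" using beta_pow1 by simp
      then have "n dvd i" unfolding NN_def by simp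
      then show False using i by (simp add: nat_dvd_not_less)
    qed
  next
    fix j assume "j < EE + 1"
    then have "poly (map_poly phi gg) (beta ^ (NN - EE) * (beta ^ 2) ^ j) = 0" by (rule run_roots)
    then show "poly (map_poly phi c) (beta ^ (NN - EE) * (beta ^ 2) ^ j) = 0"
      unfolding c_def by (simp add: map_phi_mult)
  qed
  then show ?thesis using hd by simp
qed

lemma min_dist_bound: "EE + 2 \<le> min_dist n (negacyclic_bch phi beta n delta)"
proof -
  define C where "C = negacyclic_bch phi beta n delta"
  define H where "H = {hamming_dist n c1 c2 | c1 c2. c1 \<in> C \<and> c2 \<in> C \<and> c1 \<noteq> c2}"
  have fin: "finite H"
  proof (rule finite_subset)
    show "H \<subseteq> {..n}"
    proof
      have hb: "hamming_dist n c1 c2 \<le> n" for c1 c2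
      proof -
        have "card {i. i < n \<and> Polynomial.coeff c1 i \<noteq> Polynomial.coeff c2 i} \<le> card {..<n}"
          by (intro card_mono) auto
        then show ?thesis unfolding hamming_dist_def by simp
      qed
      fix x assume "x \<in> H"
      then show "x \<in> {..n}" using hb unfolding H_def by auto
    qed
  qed simp
  have "gg = gg * 1 \<and> degree (1::'a poly) < n - degree gg" using deg_lt deg_gg by simp
  then have g1: "gg \<in> C" unfolding C_def code_eq by blast
  have "0 = gg * 0 \<and> degree (0::'a poly) < n - degree gg" using deg_lt deg_gg by simp
  then have g2: "0 \<in> C" unfolding C_def code_eq by blast
  note g1 g2
  then have ne: "H \<noteq> {}" unfolding H_def using gg_nz by blast
  have "\<forall>x\<in>H. EE + 2 \<le> x" unfolding H_def C_def using weight_bound by blast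
  then show ?thesis unfolding min_dist_def H_def[symmetric] C_def[symmetric] using Min_ge_iff[OF fin ne] by blast
qed

lemma main:
  "let beta = alpha ^ ((q ^ l - 1) div (2 * n));
       C = negacyclic_bch phi beta n delta;
       d = min_dist n C
   in int (code_dim C) = int n - 2 * int m * \<lceil>real ((2 * delta - 3) * (q - 1)) / real (2 * q)\<rceil>
    \<and> bch_generator phi beta delta =
        (\<Prod>i \<in> {i. i \<le> delta - 2 \<and> i mod q \<noteq> (q - 1) div 2}. minpoly phi (beta ^ (1 + 2 * i)))
    \<and> (if delta mod q = (q + 1) div 2 then d \<ge> 2 * delta + 1 else d \<ge> 2 * delta - 1)"
proof -
  have b: "alpha ^ ((q ^ l - 1) div (2 * n)) = beta" unfolding beta_def NN_def by simp
  have g: "bch_generator phi beta delta =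
        (\<Prod>i \<in> {i. i \<le> delta - 2 \<and> i mod q \<noteq> (q - 1) div 2}. minpoly phi (beta ^ (1 + 2 * i)))"
    unfolding bch_gen gg_def RR_def minpoly_eq ..
  have d: "(if delta mod q = (q + 1) div 2 then min_dist n (negacyclic_bch phi beta n delta) \<ge> 2 * delta + 1
            else min_dist n (negacyclic_bch phi beta n delta) \<ge> 2 * delta - 1)"
    using min_dist_bound d2 unfolding EE_def sp_def by auto
  show ?thesis unfolding Let_def b using dim_final g d by blast
qed

end

theorem theorem24:
  fixes phi :: "'a::{finite,field_gcd} \<Rightarrow> 'b::{finite,field}"
    and alpha :: 'b and q m n l delta :: nat
  assumes "q = card (UNIV :: 'a set)" and "odd q"
    and "m \<ge> 2" and "n = (q ^ m + 1) div 2"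
    and "l = ord (2 * n) q"
    and "ring_embedding phi" and "card (UNIV :: 'b set) = q ^ l"
    and "primitive_element alpha"
    and "2 \<le> delta"
    and "(even m \<and> m \<ge> 4 \<and> 2 * delta \<le> q ^ (m div 2) + 3) \<or>
         (odd m \<and> m \<ge> 3 \<and> 2 * delta + q \<le> q ^ ((m + 1) div 2) + 2)"
  shows "let beta = alpha ^ ((q ^ l - 1) div (2 * n));
             C = negacyclic_bch phi beta n delta;
             d = min_dist n C
         in int (code_dim C) = int n - 2 * int m * \<lceil>real ((2 * delta - 3) * (q - 1)) / real (2 * q)\<rceil>
          \<and> bch_generator phi beta delta =
              (\<Prod>i \<in> {i. i \<le> delta - 2 \<and> i mod q \<noteq> (q - 1) div 2}. minpoly phi (beta ^ (1 + 2 * i)))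
          \<and> (if delta mod q = (q + 1) div 2 then d \<ge> 2 * delta + 1 else d \<ge> 2 * delta - 1)"
proof -
  interpret bchloc phi q alpha m n l delta
    using assms by unfold_locales auto
  show ?thesis by (rule main)
qed


end
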